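(* The following problem is undecidable: given a finite alphabet $\Sigma$ and a $\mathsf{C\text{-}RASP}$ program $\phi$ over $\Sigma$, decide whether $L(\phi)=\emptyset$.
   Context: $\mathsf{C\text{-}RASP}$ formulas over a finite alphabet $\Sigma$ are given by the grammar $\phi ::= \sigma \mid \Diamond^{-}\phi \mid \Box^{-}\phi \mid \neg\phi \mid \phi_1\wedge\phi_2 \mid \sum_{t\in\mathcal{T}}\alpha_t t\sim k$, with terms $t ::= \#[\phi] \mid c$, where $\sigma\in\Sigma$, $\alpha_t,k,c\in\mathbb{Z}$, $\mathcal T$ is a finite set of terms, and ${\sim}\in\{<,\le,=,\ge,>\}$. For a string $w=w_1\cdots w_n$ and a position $i\in[1,n]$: $w,i\models\sigma$ iff $w_i=\sigma$; $\neg$ and $\wedge$ have their usual meaning; $w,i\models\Diamond^{-}\phi$ iff $w,j\models\phi$ for some $j<i$; $w,i\models\Box^{-}\phi$ iff $w,j\models\phi$ for all $j\le i$; the term $\#[\phi]$ evaluates at $(w,i)$ to $|\{j\in[1,i] : w,j\models\phi\}|$ and the term $c$ to $c$; $w,i\models\sum_t\alpha_t t\sim k$ iff the resulting integer comparison holds. We write $w\models\phi$ iff $w,|w|\models\phi$, and $L(\phi)=\{w\in\Sigma^*: w\models\phi\}$. A program is a straight-line (DAG) representation $(\phi_1,\dots,\phi_n)$ in which each $\phi_i$ may refer to earlier $\phi_j$ ($j<i$); it denotes $\phi_n$. *)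

theory Defs
  imports Main "HOL-Library.Nat_Bijection"
begin

text \<open>Alphabet symbols are natural numbers; an alphabet of size n is the set {0..<n}.
  A program is a list of lines (phi_1, ..., phi_m); a line may refer to an earlier
  line j (0-based index) via Ref j.\<close>

datatype cmp = Lt | Le | Eq | Ge | Gt

datatype cform =
    Sym nat
  | Ref nat
  | Prev cform
  | Hist cform
  | Neg cform
  | Conj cform cform
  | Cmp lsum cmp int
and cterm =
    Count cform
  | Const int
and lsum =
    LNil
  | LCons int cterm lsum

primrec cmp_holds :: "cmp \<Rightarrow> int \<Rightarrow> int \<Rightarrow> bool" where
  "cmp_holds Lt a b = (a < b)"
| "cmp_holds Le a b = (a \<le> b)"
| "cmp_holds Eq a b = (a = b)"
| "cmp_holds Ge a b = (a \<ge> b)"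
| "cmp_holds Gt a b = (a > b)"

text \<open>Positions are 1-based: w,i |= sigma iff w_i = sigma, i.e. w ! (i - 1) = sigma.
  env gives the semantics of the earlier program lines.\<close>

type_synonym word = "nat list"
type_synonym env = "(word \<Rightarrow> nat \<Rightarrow> bool) list"

primrec sat :: "env \<Rightarrow> cform \<Rightarrow> word \<Rightarrow> nat \<Rightarrow> bool"
  and tval :: "env \<Rightarrow> cterm \<Rightarrow> word \<Rightarrow> nat \<Rightarrow> int"
  and lval :: "env \<Rightarrow> lsum \<Rightarrow> word \<Rightarrow> nat \<Rightarrow> int" where
  "sat E (Sym a) w i = (1 \<le> i \<and> i \<le> length w \<and> w ! (i - 1) = a)"
| "sat E (Ref j) w i = (j < length E \<and> (E ! j) w i)"
| "sat E (Prev f) w i = (\<exists>j. 1 \<le> j \<and> j < i \<and> sat E f w j)"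
| "sat E (Hist f) w i = (\<forall>j. 1 \<le> j \<and> j \<le> i \<longrightarrow> sat E f w j)"
| "sat E (Neg f) w i = (\<not> sat E f w i)"
| "sat E (Conj f g) w i = (sat E f w i \<and> sat E g w i)"
| "sat E (Cmp s c k) w i = cmp_holds c (lval E s w i) k"
| "tval E (Count f) w i = int (card {j. 1 \<le> j \<and> j \<le> i \<and> sat E f w j})"
| "tval E (Const c) w i = c"
| "lval E LNil w i = 0"
| "lval E (LCons a t s) w i = a * tval E t w i + lval E s w i"

definition prog_den :: "cform list \<Rightarrow> env" where
  "prog_den ps = foldl (\<lambda>E p. E @ [sat E p]) [] ps"

definition accepts :: "cform list \<Rightarrow> word \<Rightarrow> bool" where
  "accepts ps w = (ps \<noteq> [] \<and> last (prog_den ps) w (length w))"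

definition lang :: "nat \<Rightarrow> cform list \<Rightarrow> word set" where
  "lang n ps = {w. set w \<subseteq> {..<n} \<and> accepts ps w}"

primrec wf_form :: "nat \<Rightarrow> nat \<Rightarrow> cform \<Rightarrow> bool"
  and wf_term :: "nat \<Rightarrow> nat \<Rightarrow> cterm \<Rightarrow> bool"
  and wf_lsum :: "nat \<Rightarrow> nat \<Rightarrow> lsum \<Rightarrow> bool" where
  "wf_form n m (Sym a) = (a < n)"
| "wf_form n m (Ref j) = (j < m)"
| "wf_form n m (Prev f) = wf_form n m f"
| "wf_form n m (Hist f) = wf_form n m f"
| "wf_form n m (Neg f) = wf_form n m f"
| "wf_form n m (Conj f g) = (wf_form n m f \<and> wf_form n m g)"
| "wf_form n m (Cmp s c k) = wf_lsum n m s"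
| "wf_term n m (Count f) = wf_form n m f"
| "wf_term n m (Const c) = True"
| "wf_lsum n m LNil = True"
| "wf_lsum n m (LCons a t s) = (wf_term n m t \<and> wf_lsum n m s)"

definition wf_prog :: "nat \<Rightarrow> cform list \<Rightarrow> bool" where
  "wf_prog n ps = (ps \<noteq> [] \<and> (\<forall>i < length ps. wf_form n i (ps ! i)))"

primrec enc_cmp :: "cmp \<Rightarrow> nat" where
  "enc_cmp Lt = 0" | "enc_cmp Le = 1" | "enc_cmp Eq = 2" | "enc_cmp Ge = 3" | "enc_cmp Gt = 4"

primrec enc_form :: "cform \<Rightarrow> nat"
  and enc_term :: "cterm \<Rightarrow> nat"
  and enc_lsum :: "lsum \<Rightarrow> nat" where
  "enc_form (Sym a) = prod_encode (0, a)"
| "enc_form (Ref j) = prod_encode (1, j)"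
| "enc_form (Prev f) = prod_encode (2, enc_form f)"
| "enc_form (Hist f) = prod_encode (3, enc_form f)"
| "enc_form (Neg f) = prod_encode (4, enc_form f)"
| "enc_form (Conj f g) = prod_encode (5, prod_encode (enc_form f, enc_form g))"
| "enc_form (Cmp s c k) =
     prod_encode (6, prod_encode (enc_lsum s, prod_encode (enc_cmp c, int_encode k)))"
| "enc_term (Count f) = prod_encode (0, enc_form f)"
| "enc_term (Const c) = prod_encode (1, int_encode c)"
| "enc_lsum LNil = 0"
| "enc_lsum (LCons a t s) =
     Suc (prod_encode (int_encode a, prod_encode (enc_term t, enc_lsum s)))"

definition enc_instance :: "nat \<Rightarrow> cform list \<Rightarrow> nat" where
  "enc_instance n ps = prod_encode (n, list_encode (map enc_form ps))"

datatype recf =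
    Z
  | S
  | Proj nat
  | Comp recf "recf list"
  | Prim recf recf
  | Mu recf

inductive eval :: "recf \<Rightarrow> nat list \<Rightarrow> nat \<Rightarrow> bool" where
  eval_Z: "eval Z xs 0"
| eval_S: "eval S (x # xs) (Suc x)"
| eval_Proj: "i < length xs \<Longrightarrow> eval (Proj i) xs (xs ! i)"
| eval_Comp: "list_all2 (\<lambda>g y. eval g xs y) gs ys \<Longrightarrow> eval f ys z \<Longrightarrow> eval (Comp f gs) xs z"
| eval_Prim0: "eval f xs z \<Longrightarrow> eval (Prim f g) (0 # xs) z"
| eval_PrimS: "eval (Prim f g) (n # xs) r \<Longrightarrow> eval g (n # r # xs) z
                 \<Longrightarrow> eval (Prim f g) (Suc n # xs) z"
| eval_Mu: "eval f (n # xs) 0 \<Longrightarrow> (\<forall>m < n. \<exists>k. eval f (m # xs) (Suc k))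
              \<Longrightarrow> eval (Mu f) xs n"

end

theory Submission
  imports Defs "HOL-Library.Nat_Bijection"
begin

inductive_cases evZE: "eval Z xs y"
inductive_cases evSE: "eval S xs y"
inductive_cases evProjE: "eval (Proj i) xs y"
inductive_cases evCompE: "eval (Comp f gs) xs y"
inductive_cases evPrimE: "eval (Prim f g) xs y"
inductive_cases evMuE: "eval (Mu f) xs y"

lemma eval_det: "eval f xs y \<Longrightarrow> eval f xs y' \<Longrightarrow> y = y'"
proof (induction arbitrary: y' rule: eval.induct)
  case (eval_Z xs) then show ?case by (blast elim: evZE)
next
  case (eval_S x xs) then show ?case by (blast elim: evSE)
next
  case (eval_Proj i xs) then show ?case by (blast elim: evProjE)
next
  case (eval_Comp xs gs ys f z)
  from eval_Comp.prems obtain ys' where a: "list_all2 (\<lambda>g y. eval g xs y) gs ys'" and b: "eval f ys' y'"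
    by (blast elim: evCompE)
  have "ys = ys'" using eval_Comp.IH(1) a
  proof (induction gs arbitrary: ys ys')
    case Nil then show ?case by auto
  next
    case (Cons g gs)
    then show ?case by (auto simp: list_all2_Cons1)
  qed
  then show ?case using eval_Comp.IH(2) b by auto
next
  case (eval_Prim0 f xs z g) 
  from eval_Prim0.prems show ?case
    by (rule evPrimE) (use eval_Prim0.IH in auto)
next
  case (eval_PrimS f g n xs r z)
  from eval_PrimS.prems obtain r' where "eval (Prim f g) (n # xs) r'" "eval g (n # r' # xs) y'"
    by (rule evPrimE) auto
  then show ?case using eval_PrimS.IH by auto
next
  case (eval_Mu f n xs)
  from eval_Mu.prems obtain n' where a: "eval f (n' # xs) 0" and b: "\<forall>m<n'. \<exists>k. eval f (m # xs) (Suc k)" and [simp]: "y' = n'"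
    by (rule evMuE) auto
  show ?case
  proof (rule ccontr)
    assume "n \<noteq> y'"
    then consider "n < n'" | "n' < n" by (simp, linarith)
    then show False
    proof cases
      case 1 then obtain k where "eval f (n # xs) (Suc k)" using b by auto
      then show False using eval_Mu.IH by (metis Zero_not_Suc)
    next
      case 2 then obtain k where "eval f (n' # xs) (Suc k) \<and> (\<forall>y'. eval f (n' # xs) y' \<longrightarrow> Suc k = y')" using eval_Mu.IH(2) by auto
      then show False using a by auto
    qed
  qed
qed

section \<open>Arithmetic recursive functions\<close>

lemma eval_Proj': "i < length xs \<Longrightarrow> y = xs ! i \<Longrightarrow> eval (Proj i) xs y"
  using eval_Proj by simp

lemma eval_S': "y = Suc x \<Longrightarrow> eval S (x # xs) y"
  using eval_S by simp

primrec cst :: "nat \<Rightarrow> recf" where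
  "cst 0 = Z"
| "cst (Suc k) = Comp S [cst k]"

lemma eval_cst: "eval (cst k) xs k"
proof (induction k)
  case 0 then show ?case by (simp add: eval_Z)
next
  case (Suc k) then show ?case
    by (simp, intro eval_Comp[where ys="[k]"]) (auto intro: eval_S)
qed

definition radd :: recf where "radd = Prim (Proj 0) (Comp S [Proj 1])"

lemma eval_radd0: "eval radd [n, b] (n + b)"
proof (induction n)
  case 0 then show ?case unfolding radd_def by (auto intro!: eval_Prim0 eval_Proj')
next
  case (Suc n)
  show ?case unfolding radd_def
    apply (rule eval_PrimS[OF Suc[unfolded radd_def]])
    by (rule eval_Comp[where ys="[n+b]"]) (auto intro!: eval_Proj' eval_S')
qed

lemma eval_radd: "y = n + b \<Longrightarrow> eval radd [n, b] y"
  using eval_radd0 by simp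

definition rtri :: recf where "rtri = Prim Z (Comp radd [Comp S [Proj 0], Proj 1])"

lemma eval_rtri0: "eval rtri [n] (triangle n)"
proof (induction n)
  case 0 then show ?case unfolding rtri_def by (auto intro!: eval_Prim0 eval_Z)
next
  case (Suc n)
  have h: "eval (Comp radd [Comp S [Proj 0], Proj 1]) [n, triangle n] (triangle n + Suc n)"
    apply (rule eval_Comp[where ys="[Suc n, triangle n]"])
     apply (auto intro!: eval_Proj' eval_S' eval_radd)
    by (rule eval_Comp[where ys="[n]"]) (auto intro!: eval_Proj' eval_S')
  then show ?case unfolding rtri_def
    using eval_PrimS[OF Suc[unfolded rtri_def] h] by simp
qed

lemma eval_rtri: "y = triangle n \<Longrightarrow> eval rtri [n] y"
  using eval_rtri0 by simp

definition rpe :: recf where "rpe = Comp radd [Comp rtri [Comp radd [Proj 0, Proj 1]], Proj 0]"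

lemma eval_rpe0: "eval rpe [a, b] (prod_encode (a, b))"
  unfolding rpe_def prod_encode_def
  apply (rule eval_Comp[where ys="[triangle (a+b), a]"])
   apply (auto intro!: eval_Proj' eval_radd)
  apply (rule eval_Comp[where ys="[a+b]"])
   apply (auto intro!: eval_rtri)
  apply (rule eval_Comp[where ys="[a,b]"])
  by (auto intro!: eval_Proj' eval_radd)

lemma eval_comp2: "eval g1 xs a \<Longrightarrow> eval g2 xs b \<Longrightarrow> y = prod_encode (a, b) \<Longrightarrow> eval (Comp rpe [g1, g2]) xs y"
  by (rule eval_Comp[where ys="[a, b]"]) (auto intro: eval_rpe0)

lemma eval_compS: "eval g xs a \<Longrightarrow> y = Suc a \<Longrightarrow> eval (Comp S [g]) xs y"
  by (rule eval_Comp[where ys="[a]"]) (auto intro: eval_S)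

lemma eval_dbl: "y = 2 * x \<Longrightarrow> eval (Comp radd [Proj 0, Proj 0]) [x] y"
  by (rule eval_Comp[where ys="[x, x]"]) (auto intro!: eval_Proj' eval_radd)

section \<open>Register machines\<close>

datatype instr = Inc nat nat | Dec nat nat nat

type_synonym conf = "nat \<times> (nat \<Rightarrow> nat)"

fun step :: "instr list \<Rightarrow> conf \<Rightarrow> conf option" where
  "step p (l, R) = (if l < length p then
     (case p ! l of Inc r l' \<Rightarrow> Some (l', R(r := Suc (R r)))
       | Dec r l1 l2 \<Rightarrow> (if R r = 0 then Some (l2, R) else Some (l1, R(r := R r - 1))))
     else None)"

definition stp :: "instr list \<Rightarrow> conf \<Rightarrow> conf \<Rightarrow> bool" where
  "stp p c c' \<longleftrightarrow> step p c = Some c'"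

abbreviation reach :: "instr list \<Rightarrow> conf \<Rightarrow> conf \<Rightarrow> bool" where
  "reach p \<equiv> (stp p)\<^sup>*\<^sup>*"

lemma reach_det: "reach p c c1 \<Longrightarrow> reach p c c2 \<Longrightarrow> step p c2 = None \<Longrightarrow> reach p c1 c2"
proof (induction arbitrary: c2 rule: converse_rtranclp_induct)
  case base then show ?case by simp
next
  case (step y z)
  from step.prems(1) show ?case
  proof (cases rule: converse_rtranclpE)
    case base then show ?thesis using step.hyps(1) step.prems(2) by (simp add: stp_def)
  next
    case (step z')
    then have "z' = z" using \<open>stp p y z\<close> by (simp add: stp_def)
    then show ?thesis using step.IH step.prems(2) \<open>reach p z' c2\<close> by simp
  qed
qed

definition codeat :: "instr list \<Rightarrow> nat \<Rightarrow> instr list \<Rightarrow> bool" where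
  "codeat p b c \<longleftrightarrow> b + length c \<le> length p \<and> (\<forall>i<length c. p ! (b + i) = c ! i)"

lemma codeat_append[simp]: "codeat p b (c1 @ c2) \<longleftrightarrow> codeat p b c1 \<and> codeat p (b + length c1) c2"
proof
  assume H: "codeat p b (c1 @ c2)"
  then have L: "b + length c1 + length c2 \<le> length p" and A: "\<And>i. i < length c1 + length c2 \<Longrightarrow> p ! (b + i) = (c1 @ c2) ! i"
    by (auto simp: codeat_def)
  have "codeat p b c1" unfolding codeat_def
  proof (intro conjI allI impI)
    show "b + length c1 \<le> length p" using L by simp
    fix i assume "i < length c1" then show "p ! (b + i) = c1 ! i" using A[of i] by (simp add: nth_append)
  qed
  moreover have "codeat p (b + length c1) c2" unfolding codeat_def
  proof (intro conjI allI impI)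
    show "b + length c1 + length c2 \<le> length p" using L by simp
    fix i assume "i < length c2" then show "p ! (b + length c1 + i) = c2 ! i" using A[of "length c1 + i"] by (simp add: nth_append add.assoc)
  qed
  ultimately show "codeat p b c1 \<and> codeat p (b + length c1) c2" ..
next
  assume "codeat p b c1 \<and> codeat p (b + length c1) c2"
  then have L: "b + length c1 + length c2 \<le> length p" and A1: "\<And>i. i < length c1 \<Longrightarrow> p ! (b + i) = c1 ! i"
    and A2: "\<And>i. i < length c2 \<Longrightarrow> p ! (b + length c1 + i) = c2 ! i"
    by (auto simp: codeat_def)
  show "codeat p b (c1 @ c2)" unfolding codeat_def
  proof (intro conjI allI impI)
    show "b + length (c1 @ c2) \<le> length p" using L by simp
    fix i assume i: "i < length (c1 @ c2)"
    show "p ! (b + i) = (c1 @ c2) ! i"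
    proof (cases "i < length c1")
      case True then show ?thesis using A1 by (simp add: nth_append)
    next
      case False
      then have "i = length c1 + (i - length c1)" by simp
      then show ?thesis using A2[of "i - length c1"] i False by (simp add: nth_append add.assoc[symmetric])
    qed
  qed
qed

lemma codeat_Cons: "codeat p b (i # j # c) \<longleftrightarrow> codeat p b [i] \<and> codeat p (Suc b) (j # c)"
  using codeat_append[of p b "[i]" "j # c"] by simp

lemma codeat_single: "codeat p b [i] \<longleftrightarrow> b < length p \<and> p ! b = i"
  unfolding codeat_def by auto

lemma stp_Inc: "codeat p b [Inc r l'] \<Longrightarrow> stp p (b, R) (l', R(r := Suc (R r)))"
  by (simp add: codeat_single stp_def)

lemma stp_Dec0: "codeat p b [Dec r l1 l2] \<Longrightarrow> R r = 0 \<Longrightarrow> stp p (b, R) (l2, R)"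
  by (simp add: codeat_single stp_def)

lemma stp_DecS: "codeat p b [Dec r l1 l2] \<Longrightarrow> R r \<noteq> 0 \<Longrightarrow> stp p (b, R) (l1, R(r := R r - 1))"
  by (simp add: codeat_single stp_def)

definition CLR :: "nat \<Rightarrow> nat \<Rightarrow> instr list" where "CLR r b = [Dec r b (Suc b)]"

lemma reach_CLR: "codeat p b (CLR r b) \<Longrightarrow> reach p (b, R) (Suc b, R(r := 0))"
proof (induction "R r" arbitrary: R)
  case 0
  then have st: "stp p (b, R) (Suc b, R)" by (intro stp_Dec0) (auto simp: CLR_def)
  have e: "R(r := 0) = R" using 0 by (auto simp: fun_eq_iff)
  show ?case unfolding e by (rule r_into_rtranclp[where r="stp p", OF st])
next
  case (Suc x)
  then have "stp p (b, R) (b, R(r := R r - 1))" using stp_DecS[of p b r b "Suc b" R] by (auto simp: CLR_def)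
  moreover have "R r - 1 = x" using Suc(2) by simp
  ultimately have "stp p (b, R) (b, R(r := x))" by simp
  moreover have "reach p (b, R(r := x)) (Suc b, R(r := 0))" using Suc(1)[of "R(r := x)"] Suc(3) by simp
  ultimately show ?case by (rule converse_rtranclp_into_rtranclp)
qed

definition MOVE :: "nat \<Rightarrow> nat \<Rightarrow> nat \<Rightarrow> instr list" where
  "MOVE a d b = [Dec a (b+1) (b+2), Inc d b]"

lemma reach_MOVE: "a \<noteq> d \<Longrightarrow> codeat p b (MOVE a d b) \<Longrightarrow> reach p (b, R) (b+2, R(a := 0, d := R d + R a))"
proof (induction "R a" arbitrary: R)
  case 0
  then have st: "stp p (b, R) (b+2, R)" by (intro stp_Dec0[of p b a "b+1"]) (auto simp: MOVE_def codeat_Cons)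
  have e: "R(a := 0, d := R d + R a) = R" using 0 by (auto simp: fun_eq_iff)
  show ?case unfolding e by (rule r_into_rtranclp[where r="stp p", OF st])
next
  case (Suc x)
  have c1: "codeat p b [Dec a (b+1) (b+2)]" "codeat p (Suc b) [Inc d b]" using Suc(4) by (auto simp: MOVE_def codeat_Cons)
  have "stp p (b, R) (b+1, R(a := x))" using stp_DecS[OF c1(1), of R] Suc(2)[symmetric] by simp
  moreover have "stp p (b+1, R(a := x)) (b, R(a := x, d := Suc (R d)))" using stp_Inc[OF c1(2), of "R(a:=x)"] Suc(3) by auto
  moreover have "reach p (b, R(a := x, d := Suc (R d))) (b+2, R(a := 0, d := R d + R a))"
  proof -
    have e: "(R(a := x, d := Suc (R d)))(a := 0, d := (R(a := x, d := Suc (R d))) d + (R(a := x, d := Suc (R d))) a) = R(a := 0, d := R d + R a)"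
      using Suc(2,3) by (auto simp: fun_eq_iff)
    have "x = (R(a := x, d := Suc (R d))) a" using Suc(3) by simp
    from Suc(1)[of "R(a := x, d := Suc (R d))", OF this Suc(3,4)] show ?thesis unfolding e .
  qed
  ultimately show ?case by (meson converse_rtranclp_into_rtranclp)
qed

definition MOVE2 :: "nat \<Rightarrow> nat \<Rightarrow> nat \<Rightarrow> nat \<Rightarrow> instr list" where
  "MOVE2 a d e b = [Dec a (b+1) (b+3), Inc d (b+2), Inc e b]"

lemma reach_MOVE2: "a \<noteq> d \<Longrightarrow> a \<noteq> e \<Longrightarrow> d \<noteq> e \<Longrightarrow> codeat p b (MOVE2 a d e b) \<Longrightarrow>
   reach p (b, R) (b+3, R(a := 0, d := R d + R a, e := R e + R a))"
proof (induction "R a" arbitrary: R)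
  case 0
  then have st: "stp p (b, R) (b+3, R)" by (intro stp_Dec0[of p b a "b+1"]) (auto simp: MOVE2_def codeat_Cons)
  have e: "R(a := 0, d := R d + R a, e := R e + R a) = R" using 0 by (auto simp: fun_eq_iff)
  show ?case unfolding e by (rule r_into_rtranclp[where r="stp p", OF st])
next
  case (Suc x)
  have c1: "codeat p b [Dec a (b+1) (b+3)]" "codeat p (Suc b) [Inc d (b+2)]" "codeat p (Suc (Suc b)) [Inc e b]"
    using Suc(6) by (auto simp: MOVE2_def codeat_Cons)
  have "stp p (b, R) (b+1, R(a := x))" using stp_DecS[OF c1(1), of R] Suc(2)[symmetric] by simp
  moreover have "stp p (b+1, R(a := x)) (b+2, R(a := x, d := Suc (R d)))" using stp_Inc[OF c1(2), of "R(a:=x)"] Suc(3) by auto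
  moreover have "stp p (b+2, R(a := x, d := Suc (R d))) (b, R(a := x, d := Suc (R d), e := Suc (R e)))"
    using stp_Inc[OF c1(3), of "R(a:=x, d := Suc (R d))"] Suc(3-5) by (auto simp: numeral_2_eq_2)
  moreover have "reach p (b, R(a := x, d := Suc (R d), e := Suc (R e))) (b+3, R(a := 0, d := R d + R a, e := R e + R a))"
  proof -
    define R' where "R' = R(a := x, d := Suc (R d), e := Suc (R e))"
    have e: "R'(a := 0, d := R' d + R' a, e := R' e + R' a) = R(a := 0, d := R d + R a, e := R e + R a)"
      using Suc(2-5) by (auto simp: fun_eq_iff R'_def)
    have "x = R' a" using Suc(3,4) by (simp add: R'_def)
    from Suc(1)[of R', OF this Suc(3,4,5,6)] have "reach p (b, R') (b + 3, R(a := 0, d := R d + R a, e := R e + R a))" unfolding e .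
    then show ?thesis unfolding R'_def .
  qed
  ultimately show ?case by (meson converse_rtranclp_into_rtranclp)
qed

definition COPY :: "nat \<Rightarrow> nat \<Rightarrow> nat \<Rightarrow> nat \<Rightarrow> instr list" where
  "COPY a d t b = CLR d b @ CLR t (b+1) @ MOVE2 a d t (b+2) @ MOVE t a (b+5)"

lemma length_COPY[simp]: "length (COPY a d t b) = 7"
  by (simp add: COPY_def CLR_def MOVE_def MOVE2_def)

lemma length_CLR[simp]: "length (CLR r b) = 1" by (simp add: CLR_def)
lemma length_MOVE[simp]: "length (MOVE a d b) = 2" by (simp add: MOVE_def)
lemma length_MOVE2[simp]: "length (MOVE2 a d e b) = 3" by (simp add: MOVE2_def)

lemma reach_eq: "reach p (l1, R1) (l2, R2) \<Longrightarrow> l1 = l1' \<Longrightarrow> l2 = l2' \<Longrightarrow> R1 = R1' \<Longrightarrow> R2 = R2' \<Longrightarrow> reach p (l1', R1') (l2', R2')"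
  by simp

lemma reach_COPY: "a \<noteq> d \<Longrightarrow> a \<noteq> t \<Longrightarrow> d \<noteq> t \<Longrightarrow> codeat p b (COPY a d t b) \<Longrightarrow>
   reach p (b, R) (b+7, R(d := R a, t := 0))"
proof -
  assume ne: "a \<noteq> d" "a \<noteq> t" "d \<noteq> t" and c: "codeat p b (COPY a d t b)"
  have cc: "codeat p b (CLR d b) \<and> codeat p (b + 1) (CLR t (b+1)) \<and> codeat p (b + 1 + 1) (MOVE2 a d t (b+2))
     \<and> codeat p (b + 1 + 1 + 3) (MOVE t a (b+5))"
    using c unfolding COPY_def codeat_append length_CLR length_MOVE2 by blast
  have e1: "b + 1 + 1 = b + 2" "b + 2 + 3 = b + 5" by simp_all
  have c1: "codeat p b (CLR d b)" "codeat p (b+1) (CLR t (b+1))" "codeat p (b+2) (MOVE2 a d t (b+2))"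
    "codeat p (b+5) (MOVE t a (b+5))"
    using cc unfolding e1 by blast+
  define R1 where "R1 = R(d := 0, t := 0)"
  define R2 where "R2 = R1(a := 0, d := R1 d + R1 a, t := R1 t + R1 a)"
  have "reach p (b, R) (b+1, R(d := 0))" using reach_CLR[OF c1(1)] by simp
  also have "reach p (b+1, R(d := 0)) (b+2, R1)" 
    by (rule reach_eq[OF reach_CLR[OF c1(2)]]) (simp_all add: R1_def)
  also have "reach p (b+2, R1) (b+5, R2)"
    by (rule reach_eq[OF reach_MOVE2[OF ne c1(3)]]) (simp_all add: R2_def)
  also have "reach p (b+5, R2) (b+7, R(d := R a, t := 0))"
    apply (rule reach_eq[OF reach_MOVE[OF ne(2)[symmetric] c1(4), of R2]])
    using ne by (auto simp: R2_def R1_def fun_eq_iff)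
  finally show ?thesis .
qed

primrec compile :: "recf \<Rightarrow> nat list \<Rightarrow> nat \<Rightarrow> nat \<Rightarrow> nat \<Rightarrow> instr list"
  and compile_list :: "recf list \<Rightarrow> nat list \<Rightarrow> nat \<Rightarrow> nat \<Rightarrow> nat \<Rightarrow> instr list" where
  "compile Z ins out s b = CLR out b"
| "compile S ins out s b = (case ins of [] \<Rightarrow> [] | a # _ \<Rightarrow> COPY a out s b @ [Inc out (b+8)])"
| "compile (Proj i) ins out s b = (if i < length ins then COPY (ins ! i) out s b else [])"
| "compile (Comp f gs) ins out s b =
    (let cg = compile_list gs ins s (s + length gs) b
     in cg @ compile f [s..<s + length gs] out (s + length gs) (b + length cg))"
| "compile (Prim f g) ins out s b = (case ins of [] \<Rightarrow> [] | nr # xr \<Rightarrow>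
    (let cf = compile f xr (s+2) (s+5) (b+8);
         lp = b + 8 + length cf;
         cgc = compile g ((s+1) # (s+2) # xr) (s+3) (s+5) (lp+1);
         q = lp + 1 + length cgc;
         ex = q + 4
     in COPY nr s (s+4) b @ CLR (s+1) (b+7) @ cf @ [Dec s (lp+1) ex] @ cgc @ CLR (s+2) q
        @ MOVE (s+3) (s+2) (q+1) @ [Inc (s+1) lp] @ CLR out ex @ MOVE (s+2) out (ex+1)))"
| "compile (Mu f) ins out s b =
    (let cf = compile f (s # ins) (s+1) (s+2) (b+1);
         q = b + 1 + length cf;
         ex = q + 2
     in CLR s b @ cf @ [Dec (s+1) (q+1) ex, Inc s (b+1)] @ CLR out ex @ MOVE s out (ex+1))"
| "compile_list [] ins ob s b = []"
| "compile_list (g # gs) ins ob s b =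
    (let c = compile g ins ob s b in c @ compile_list gs ins (Suc ob) s (b + length c))"

definition Qc :: "recf \<Rightarrow> nat list \<Rightarrow> nat \<Rightarrow> bool" where
  "Qc f xs y \<longleftrightarrow> (\<forall>ins out s b p R. length ins = length xs \<longrightarrow> map R ins = xs \<longrightarrow> (\<forall>r\<in>set ins. r < s)
     \<longrightarrow> out < s \<longrightarrow> out \<notin> set ins \<longrightarrow> codeat p b (compile f ins out s b) \<longrightarrow>
     (\<exists>R'. reach p (b, R) (b + length (compile f ins out s b), R') \<and> R' out = y \<and> (\<forall>r<s. r \<noteq> out \<longrightarrow> R' r = R r)))"

lemma QcI:
  assumes "\<And>ins out s b p R. length ins = length xs \<Longrightarrow> map R ins = xs \<Longrightarrow> (\<forall>r\<in>set ins. r < s)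
     \<Longrightarrow> out < s \<Longrightarrow> out \<notin> set ins \<Longrightarrow> codeat p b (compile f ins out s b) \<Longrightarrow>
     (\<exists>R'. reach p (b, R) (b + length (compile f ins out s b), R') \<and> R' out = y \<and> (\<forall>r<s. r \<noteq> out \<longrightarrow> R' r = R r))"
  shows "Qc f xs y"
  using assms unfolding Qc_def by blast

lemma QcD:
  assumes "Qc f xs y" "length ins = length xs" "map R ins = xs" "\<forall>r\<in>set ins. r < s"
     "out < s" "out \<notin> set ins" "codeat p b (compile f ins out s b)"
  shows "\<exists>R'. reach p (b, R) (b + length (compile f ins out s b), R') \<and> R' out = y \<and> (\<forall>r<s. r \<noteq> out \<longrightarrow> R' r = R r)"
  using assms unfolding Qc_def by blast

lemma Qc_Z: "Qc Z xs 0"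
proof (rule QcI)
  fix ins out s b p R
  assume "codeat p b (compile Z ins out s b)"
  then have "reach p (b, R) (Suc b, R(out := 0))" by (simp add: reach_CLR)
  then show "\<exists>R'. reach p (b, R) (b + length (compile Z ins out s b), R') \<and> R' out = 0 \<and> (\<forall>r<s. r \<noteq> out \<longrightarrow> R' r = R r)"
    by (intro exI[of _ "R(out := 0)"]) simp
qed

lemma Qc_S: "Qc S (x # xs) (Suc x)"
proof (rule QcI)
  fix ins out s b p R
  assume len: "length ins = length (x # xs)" and m: "map R ins = x # xs" and lt: "\<forall>r\<in>set ins. r < s"
    and o: "out < s" "out \<notin> set ins" and c: "codeat p b (compile S ins out s b)"
  obtain a ins' where ins: "ins = a # ins'" using len by (cases ins) auto
  have c1: "codeat p b (COPY a out s b)" "codeat p (b+7) [Inc out (b+8)]" using c by (simp_all add: ins)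
  have ne: "a \<noteq> out" "a \<noteq> s" "out \<noteq> s" using o lt ins by auto
  define R1 where "R1 = R(out := R a, s := 0)"
  have "reach p (b, R) (b+7, R1)" unfolding R1_def by (rule reach_COPY[OF ne c1(1)])
  also have "stp p (b+7, R1) (b+8, R1(out := Suc (R1 out)))"
    by (rule stp_Inc[OF c1(2)])
  finally have "reach p (b, R) (b + 8, R1(out := Suc (R1 out)))" .
  moreover have "R a = x" using m ins by simp
  ultimately show "\<exists>R'. reach p (b, R) (b + length (compile S ins out s b), R') \<and> R' out = Suc x \<and> (\<forall>r<s. r \<noteq> out \<longrightarrow> R' r = R r)"
    using ne by (intro exI[of _ "R1(out := Suc (R1 out))"]) (simp add: ins R1_def)
qed

lemma Qc_Proj: "i < length xs \<Longrightarrow> Qc (Proj i) xs (xs ! i)"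
proof (rule QcI)
  fix ins out s b p R
  assume i: "i < length xs" and len: "length ins = length xs" and m: "map R ins = xs" and lt: "\<forall>r\<in>set ins. r < s"
    and o: "out < s" "out \<notin> set ins" and c: "codeat p b (compile (Proj i) ins out s b)"
  have ii: "i < length ins" using i len by simp
  have c1: "codeat p b (COPY (ins ! i) out s b)" using c ii by simp
  have ne: "ins ! i \<noteq> out" "ins ! i \<noteq> s" "out \<noteq> s" using o lt ii nth_mem[OF ii] by auto
  have "reach p (b, R) (b+7, R(out := R (ins ! i), s := 0))" by (rule reach_COPY[OF ne c1(1)])
  moreover have "R (ins ! i) = xs ! i" using m ii by auto
  ultimately show "\<exists>R'. reach p (b, R) (b + length (compile (Proj i) ins out s b), R') \<and> R' out = xs ! i \<and> (\<forall>r<s. r \<noteq> out \<longrightarrow> R' r = R r)"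
    using ne ii by (intro exI[of _ "R(out := R (ins ! i), s := 0)"]) simp
qed


lemma map_eq_on: "(\<forall>r\<in>set xs. f r = g r) \<Longrightarrow> map f xs = map g xs"
  by (induction xs) auto

lemma Qc_list:
  "list_all2 (\<lambda>g y. Qc g xs y) gs ys \<Longrightarrow> length ins = length xs \<Longrightarrow> map R ins = xs \<Longrightarrow> (\<forall>r\<in>set ins. r < ob)
   \<Longrightarrow> ob + length gs \<le> s \<Longrightarrow> codeat p b (compile_list gs ins ob s b) \<Longrightarrow>
   \<exists>R'. reach p (b, R) (b + length (compile_list gs ins ob s b), R') \<and> (\<forall>j<length gs. R' (ob + j) = ys ! j)
       \<and> (\<forall>r<s. (r < ob \<or> ob + length gs \<le> r) \<longrightarrow> R' r = R r)"
proof (induction gs arbitrary: ys ob b R)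
  case Nil then show ?case by auto
next
  case (Cons g gs)
  from Cons.prems(1) obtain y ys' where ys: "ys = y # ys'" and Qg: "Qc g xs y" and L: "list_all2 (\<lambda>g y. Qc g xs y) gs ys'"
    by (auto simp: list_all2_Cons1)
  define c where "c = compile g ins ob s b"
  have cc: "codeat p b c" "codeat p (b + length c) (compile_list gs ins (Suc ob) s (b + length c))"
    using Cons.prems(6) by (simp_all add: c_def Let_def)
  have ob: "ob < s" "ob \<notin> set ins" "\<forall>r\<in>set ins. r < s" using Cons.prems(4,5) by auto
  obtain R1 where R1: "reach p (b, R) (b + length c, R1)" "R1 ob = y" "\<forall>r<s. r \<noteq> ob \<longrightarrow> R1 r = R r"
    using QcD[OF Qg Cons.prems(2,3) ob(3) ob(1) ob(2) cc(1)[unfolded c_def]] c_def by blast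
  have m1: "map R1 ins = xs" using Cons.prems(3,4) R1(3) ob(3) by (metis map_eq_on nat_less_le)
  have ob2: "\<forall>r\<in>set ins. r < Suc ob" "Suc ob + length gs \<le> s" using Cons.prems(4,5) by auto
  obtain R2 where R2: "reach p (b + length c, R1) (b + length c + length (compile_list gs ins (Suc ob) s (b + length c)), R2)"
    "\<forall>j<length gs. R2 (Suc ob + j) = ys' ! j" "\<forall>r<s. (r < Suc ob \<or> Suc ob + length gs \<le> r) \<longrightarrow> R2 r = R1 r"
    using Cons.IH[OF L Cons.prems(2) m1 ob2 cc(2)] by blast
  have "reach p (b, R) (b + length (compile_list (g # gs) ins ob s b), R2)"
    using R1(1) R2(1) by (simp add: c_def Let_def add.assoc)
  moreover have "\<forall>j<length (g # gs). R2 (ob + j) = ys ! j"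
  proof (intro allI impI)
    fix j assume j: "j < length (g # gs)"
    show "R2 (ob + j) = ys ! j"
    proof (cases j)
      case 0 then show ?thesis using R2(3) R1(2) ys ob(1) by simp
    next
      case (Suc j') then show ?thesis using R2(2) j ys by simp
    qed
  qed
  moreover have "\<forall>r<s. (r < ob \<or> ob + length (g # gs) \<le> r) \<longrightarrow> R2 r = R r"
    using R2(3) R1(3) by auto
  ultimately show ?case by blast
qed

lemma Qc_Comp:
  assumes L: "list_all2 (\<lambda>g y. eval g xs y \<and> Qc g xs y) gs ys" and Qf: "Qc f ys z"
  shows "Qc (Comp f gs) xs z"
proof (rule QcI)
  fix ins out s b p R
  assume len: "length ins = length xs" and m: "map R ins = xs" and lt: "\<forall>r\<in>set ins. r < s"
    and o: "out < s" "out \<notin> set ins" and c: "codeat p b (compile (Comp f gs) ins out s b)"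
  define m where "m = length gs"
  define cg where "cg = compile_list gs ins s (s + m) b"
  define cf where "cf = compile f [s..<s + m] out (s + m) (b + length cg)"
  have code: "compile (Comp f gs) ins out s b = cg @ cf" by (simp add: cg_def cf_def m_def Let_def)
  have cc: "codeat p b cg" "codeat p (b + length cg) cf" using c code by simp_all
  have L': "list_all2 (\<lambda>g y. Qc g xs y) gs ys" using L by (rule list_all2_mono) simp
  have lys: "length ys = m" using L by (simp add: m_def list_all2_lengthD)
  obtain R1 where R1: "reach p (b, R) (b + length cg, R1)" "\<forall>j<m. R1 (s + j) = ys ! j"
    "\<forall>r<s + m. (r < s \<or> s + m \<le> r) \<longrightarrow> R1 r = R r"
    using Qc_list[OF L' len m lt _ cc(1)[unfolded cg_def]] by (auto simp: cg_def m_def)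
  have m1: "map R1 [s..<s + m] = ys"
    by (rule nth_equalityI) (auto simp: lys R1(2))
  obtain R2 where R2: "reach p (b + length cg, R1) (b + length cg + length cf, R2)" "R2 out = z"
    "\<forall>r<s + m. r \<noteq> out \<longrightarrow> R2 r = R1 r"
    using QcD[OF Qf _ m1 _ _ _ cc(2)[unfolded cf_def]] o lys by (auto simp: cf_def)
  have "reach p (b, R) (b + length (compile (Comp f gs) ins out s b), R2)"
    using R1(1) R2(1) code by (simp add: add.assoc)
  moreover have "\<forall>r<s. r \<noteq> out \<longrightarrow> R2 r = R r" using R1(3) R2(3) by auto
  ultimately show "\<exists>R'. reach p (b, R) (b + length (compile (Comp f gs) ins out s b), R') \<and> R' out = z \<and> (\<forall>r<s. r \<noteq> out \<longrightarrow> R' r = R r)"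
    using R2(2) by blast
qed


lemma length_single: "length [x] = 1" by simp

lemma prim_inv: "eval (Prim f g) (Suc j # xs) a' \<Longrightarrow> \<exists>a. eval (Prim f g) (j # xs) a \<and> eval g (j # a # xs) a'"
  by (erule evPrimE) auto

lemma prim_inv0: "eval (Prim f g) (0 # xs) a \<Longrightarrow> eval f xs a"
  by (erule evPrimE) auto

lemma prim_ex: "eval (Prim f g) (n # xs) z \<Longrightarrow> j \<le> n \<Longrightarrow> \<exists>a. eval (Prim f g) (j # xs) a"
proof (induction n arbitrary: z)
  case 0 then show ?case by auto
next
  case (Suc n)
  show ?case
  proof (cases "j = Suc n")
    case True then show ?thesis using Suc.prems by auto
  next
    case False
    obtain a where "eval (Prim f g) (n # xs) a" using prim_inv[OF Suc.prems(1)] by blast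
    then show ?thesis using Suc.IH False Suc.prems(2) by auto
  qed
qed

lemma prim_loop:
  assumes Qg: "\<forall>xs y. eval g xs y \<longrightarrow> Qc g xs y"
  and ev: "eval (Prim f g) (n # xs) z"
  and xr: "length xr = length xs" "\<forall>r\<in>set xr. r < s"
  and cD: "codeat p lp [Dec s (lp+1) ex]"
  and cG: "codeat p (lp+1) (compile g ((s+1) # (s+2) # xr) (s+3) (s+5) (lp+1))"
  and q_def: "q = lp + 1 + length (compile g ((s+1) # (s+2) # xr) (s+3) (s+5) (lp+1))"
  and cC: "codeat p q (CLR (s+2) q)" and cM: "codeat p (q+1) (MOVE (s+3) (s+2) (q+1))"
  and cI: "codeat p (q+3) [Inc (s+1) lp]"
  and ex: "ex = q + 4"
  shows "\<forall>j a R. j + c = n \<longrightarrow> R s = c \<longrightarrow> R (s+1) = j \<longrightarrow> R (s+2) = a \<longrightarrow> map R xr = xs \<longrightarrow>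
          eval (Prim f g) (j # xs) a \<longrightarrow> (\<exists>R'. reach p (lp, R) (ex, R') \<and> R' (s+2) = z \<and> (\<forall>r<s. R' r = R r))"
proof (induction c)
  case 0
  show ?case
  proof (intro allI impI)
    fix j a R
    assume h: "j + 0 = n" "R s = 0" "R (s+1) = j" "R (s+2) = a" "map R xr = xs" "eval (Prim f g) (j # xs) a"
    have "stp p (lp, R) (ex, R)" by (rule stp_Dec0[OF cD, of R, OF h(2)])
    moreover have "a = z" using eval_det[OF h(6) ev[folded h(1)[simplified]]] .
    ultimately show "\<exists>R'. reach p (lp, R) (ex, R') \<and> R' (s+2) = z \<and> (\<forall>r<s. R' r = R r)"
      using h(4) by (intro exI[of _ R]) auto
  qed
next
  case (Suc c)
  show ?case
  proof (intro allI impI)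
    fix j a R
    assume h: "j + Suc c = n" "R s = Suc c" "R (s+1) = j" "R (s+2) = a" "map R xr = xs" "eval (Prim f g) (j # xs) a"
    define R1 where "R1 = R(s := c)"
    have st1: "stp p (lp, R) (lp+1, R1)" using stp_DecS[OF cD, of R] h(2) by (simp add: R1_def)
    obtain a' where ea': "eval (Prim f g) (Suc j # xs) a'" using prim_ex[OF ev, of "Suc j"] h(1) by auto
    obtain a0 where a0: "eval (Prim f g) (j # xs) a0" "eval g (j # a0 # xs) a'" using prim_inv[OF ea'] by blast
    have "a0 = a" using eval_det[OF a0(1) h(6)] .
    then have eg: "eval g (j # a # xs) a'" using a0(2) by simp
    have mR1: "map R1 xr = xs" using h(5) xr(2) by (auto simp: R1_def intro!: map_eq_on)
    have ins_ok: "length ((s+1) # (s+2) # xr) = length (j # a # xs)" "map R1 ((s+1) # (s+2) # xr) = j # a # xs"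
      "\<forall>r\<in>set ((s+1) # (s+2) # xr). r < s + 5" "s + 3 < s + 5" "s + 3 \<notin> set ((s+1) # (s+2) # xr)"
      using xr mR1 h(3,4) by (auto simp: R1_def)
    obtain R2 where R2: "reach p (lp+1, R1) (q, R2)" "R2 (s+3) = a'" "\<forall>r<s+5. r \<noteq> s+3 \<longrightarrow> R2 r = R1 r"
      using QcD[OF Qg[rule_format, OF eg] ins_ok cG] q_def by auto
    define R3 where "R3 = R2(s+2 := 0)"
    have st3: "reach p (q, R2) (q+1, R3)" using reach_CLR[OF cC] by (simp add: R3_def)
    define R4 where "R4 = R3(s+3 := 0, s+2 := R3 (s+2) + R3 (s+3))"
    have st4: "reach p (q+1, R3) (q+1+2, R4)" unfolding R4_def by (rule reach_MOVE[OF _ cM]) simp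
    define R5 where "R5 = R4(s+1 := Suc (R4 (s+1)))"
    have st5: "stp p (q+3, R4) (lp, R5)" unfolding R5_def by (rule stp_Inc[OF cI])
    have R5: "R5 s = c" "R5 (s+1) = Suc j" "R5 (s+2) = a'" "map R5 xr = xs" "\<forall>r<s. R5 r = R r"
      using R2(2,3) h(3) xr(2) h(5) by (auto simp: R5_def R4_def R3_def R1_def intro!: map_eq_on)
    obtain R' where R': "reach p (lp, R5) (ex, R')" "R' (s+2) = z" "\<forall>r<s. R' r = R5 r"
      using Suc.IH[rule_format, of "Suc j" R5 a'] R5 h(1) ea' by auto
    have "reach p (lp, R) (ex, R')"
      using st1 R2(1) st3 st4 st5 R'(1) by (simp add: numeral_3_eq_3)
    then show "\<exists>R'. reach p (lp, R) (ex, R') \<and> R' (s+2) = z \<and> (\<forall>r<s. R' r = R r)"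
      using R'(2,3) R5(5) by auto
  qed
qed


lemma Qc_Prim:
  assumes Qf: "\<forall>xs y. eval f xs y \<longrightarrow> Qc f xs y" and Qg: "\<forall>xs y. eval g xs y \<longrightarrow> Qc g xs y"
  and ev0: "eval (Prim f g) xs z"
  shows "Qc (Prim f g) xs z"
proof (rule QcI)
  fix ins out s b p R
  assume len: "length ins = length xs" and m: "map R ins = xs" and lt: "\<forall>r\<in>set ins. r < s"
    and o: "out < s" "out \<notin> set ins" and c: "codeat p b (compile (Prim f g) ins out s b)"
  obtain n xs' where xs: "xs = n # xs'" using ev0 by (rule evPrimE) auto
  obtain nr xr where ins: "ins = nr # xr" using len xs by (cases ins) auto
  have ev: "eval (Prim f g) (n # xs') z" using ev0 xs by simp
  define cf where "cf = compile f xr (s+2) (s+5) (b+8)"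
  define lp where "lp = b + 8 + length cf"
  define cgc where "cgc = compile g ((s+1) # (s+2) # xr) (s+3) (s+5) (lp+1)"
  define q where "q = lp + 1 + length cgc"
  define ex where "ex = q + 4"
  have code: "compile (Prim f g) ins out s b = COPY nr s (s+4) b @ CLR (s+1) (b+7) @ cf @ [Dec s (lp+1) ex] @ cgc @ CLR (s+2) q
        @ MOVE (s+3) (s+2) (q+1) @ [Inc (s+1) lp] @ CLR out ex @ MOVE (s+2) out (ex+1)"
    unfolding cf_def lp_def cgc_def q_def ex_def ins by (simp only: compile.simps list.case Let_def)
  have cc: "codeat p b (COPY nr s (s+4) b) \<and> codeat p (b+7) (CLR (s+1) (b+7)) \<and> codeat p (b+7+1) cf
    \<and> codeat p (b+7+1+length cf) [Dec s (lp+1) ex] \<and> codeat p (b+7+1+length cf+1) cgc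
    \<and> codeat p (b+7+1+length cf+1+length cgc) (CLR (s+2) q) \<and> codeat p (b+7+1+length cf+1+length cgc+1) (MOVE (s+3) (s+2) (q+1))
    \<and> codeat p (b+7+1+length cf+1+length cgc+1+2) [Inc (s+1) lp]
    \<and> codeat p (b+7+1+length cf+1+length cgc+1+2+1) (CLR out ex)
    \<and> codeat p (b+7+1+length cf+1+length cgc+1+2+1+1) (MOVE (s+2) out (ex+1))"
    using c unfolding code codeat_append length_COPY length_CLR length_MOVE length_single by blast
  have e: "b+7+1 = b+8" "b+8+length cf = lp" "lp+1+length cgc = q" "q+1+2 = q+3" "q+3+1 = ex" by (simp_all add: lp_def q_def ex_def)
  have c1: "codeat p b (COPY nr s (s+4) b)" "codeat p (b+7) (CLR (s+1) (b+7))" "codeat p (b+8) cf"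
    "codeat p lp [Dec s (lp+1) ex]" "codeat p (lp+1) cgc" "codeat p q (CLR (s+2) q)" "codeat p (q+1) (MOVE (s+3) (s+2) (q+1))"
    "codeat p (q+3) [Inc (s+1) lp]" "codeat p ex (CLR out ex)" "codeat p (ex+1) (MOVE (s+2) out (ex+1))"
    using cc unfolding e by blast+
  have Rn: "R nr = n" and mxr: "map R xr = xs'" using m ins xs by auto
  have xrl: "length xr = length xs'" "\<forall>r\<in>set xr. r < s" using len lt ins xs by auto
  have ne: "nr \<noteq> s" "nr \<noteq> s+4" "s \<noteq> s+4" using lt ins by auto
  define R1 where "R1 = R(s := R nr, s+4 := 0)"
  have s1: "reach p (b, R) (b+7, R1)" unfolding R1_def by (rule reach_COPY[OF ne c1(1)])
  define R2 where "R2 = R1(s+1 := 0)"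
  have s2: "reach p (b+7, R1) (b+8, R2)" by (rule reach_eq[OF reach_CLR[OF c1(2), of R1]]) (simp_all add: R2_def)
  obtain a0 where ea0: "eval (Prim f g) (0 # xs') a0" using prim_ex[OF ev, of 0] by auto
  have ef: "eval f xs' a0" by (rule prim_inv0[OF ea0])
  have mR2: "map R2 xr = xs'" using mxr xrl(2) by (auto simp: R2_def R1_def intro!: map_eq_on)
  have fins: "\<forall>r\<in>set xr. r < s + 5" "s + 2 < s + 5" "s + 2 \<notin> set xr" using xrl(2) by auto
  obtain R3 where R3: "reach p (b+8, R2) (lp, R3)" "R3 (s+2) = a0" "\<forall>r<s+5. r \<noteq> s+2 \<longrightarrow> R3 r = R2 r"
    using QcD[OF Qf[rule_format, OF ef] xrl(1) mR2 fins c1(3)[unfolded cf_def]] by (auto simp: cf_def lp_def)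
  have R3v: "R3 s = n" "R3 (s+1) = 0" "map R3 xr = xs'"
    using R3(3) Rn mR2 xrl(2) by (auto simp: R2_def R1_def intro!: map_eq_on)
  obtain R4 where R4: "reach p (lp, R3) (ex, R4)" "R4 (s+2) = z" "\<forall>r<s. R4 r = R3 r"
    using prim_loop[OF Qg ev xrl c1(4) c1(5)[unfolded cgc_def] q_def[unfolded cgc_def] c1(6) c1(7) c1(8) ex_def, rule_format, where j=0 and a=a0 and R=R3 and c=n]
      R3v R3(2) ea0 by auto
  define R5 where "R5 = R4(out := 0)"
  have s5: "reach p (ex, R4) (ex+1, R5)" by (rule reach_eq[OF reach_CLR[OF c1(9), of R4]]) (simp_all add: R5_def)
  define R6 where "R6 = R5(s+2 := 0, out := R5 out + R5 (s+2))"
  have ne2: "s + 2 \<noteq> out" using o by simp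
  have s6: "reach p (ex+1, R5) (ex+1+2, R6)" unfolding R6_def by (rule reach_MOVE[OF ne2 c1(10)])
  have len_eq: "b + length (compile (Prim f g) ins out s b) = ex + 1 + 2"
    unfolding code by (simp add: ex_def q_def lp_def)
  have "reach p (b, R) (b + length (compile (Prim f g) ins out s b), R6)"
    unfolding len_eq using s1 s2 R3(1) R4(1) s5 s6 by simp
  moreover have "R6 out = z" using R4(2) ne2 by (simp add: R6_def R5_def)
  moreover have "\<forall>r<s. r \<noteq> out \<longrightarrow> R6 r = R r"
    using R4(3) R3(3) by (auto simp: R6_def R5_def R2_def R1_def)
  ultimately show "\<exists>R'. reach p (b, R) (b + length (compile (Prim f g) ins out s b), R') \<and> R' out = z \<and> (\<forall>r<s. r \<noteq> out \<longrightarrow> R' r = R r)"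
    by blast
qed


lemma length_two: "length [x, y] = 2" by simp

lemma mu_loop:
  assumes Qf: "\<forall>xs y. eval f xs y \<longrightarrow> Qc f xs y"
  and e0: "eval f (n # xs) 0" and eS: "\<forall>m<n. \<exists>k. eval f (m # xs) (Suc k)"
  and insl: "length ins = length xs" "\<forall>r\<in>set ins. r < s"
  and cF: "codeat p (b+1) (compile f (s # ins) (s+1) (s+2) (b+1))"
  and q_def: "q = b + 1 + length (compile f (s # ins) (s+1) (s+2) (b+1))"
  and cD: "codeat p q [Dec (s+1) (q+1) ex]" and cI: "codeat p (q+1) [Inc s (b+1)]"
  shows "\<forall>m R. m + c = n \<longrightarrow> R s = m \<longrightarrow> map R ins = xs \<longrightarrow>
           (\<exists>R'. reach p (b+1, R) (ex, R') \<and> R' s = n \<and> (\<forall>r<s. R' r = R r))"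
proof (induction c)
  case 0
  show ?case
  proof (intro allI impI)
    fix m R assume h: "m + 0 = n" "R s = m" "map R ins = xs"
    have fins: "length (s # ins) = length (n # xs)" "map R (s # ins) = n # xs" "\<forall>r\<in>set (s # ins). r < s + 2"
      "s + 1 < s + 2" "s + 1 \<notin> set (s # ins)" using insl h by auto
    obtain R2 where R2: "reach p (b+1, R) (q, R2)" "R2 (s+1) = 0" "\<forall>r<s+2. r \<noteq> s+1 \<longrightarrow> R2 r = R r"
      using QcD[OF Qf[rule_format, OF e0] fins cF] q_def by auto
    have "stp p (q, R2) (ex, R2)" by (rule stp_Dec0[OF cD, of R2, OF R2(2)])
    then have "reach p (b+1, R) (ex, R2)" using R2(1) by simp
    then show "\<exists>R'. reach p (b+1, R) (ex, R') \<and> R' s = n \<and> (\<forall>r<s. R' r = R r)"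
      using R2(3) h by (intro exI[of _ R2]) auto
  qed
next
  case (Suc c)
  show ?case
  proof (intro allI impI)
    fix m R assume h: "m + Suc c = n" "R s = m" "map R ins = xs"
    have "m < n" using h(1) by simp
    then obtain k where ek: "eval f (m # xs) (Suc k)" using eS by blast
    have fins: "length (s # ins) = length (m # xs)" "map R (s # ins) = m # xs" "\<forall>r\<in>set (s # ins). r < s + 2"
      "s + 1 < s + 2" "s + 1 \<notin> set (s # ins)" using insl h by auto
    obtain R2 where R2: "reach p (b+1, R) (q, R2)" "R2 (s+1) = Suc k" "\<forall>r<s+2. r \<noteq> s+1 \<longrightarrow> R2 r = R r"
      using QcD[OF Qf[rule_format, OF ek] fins cF] q_def by auto
    define R3 where "R3 = R2(s+1 := k)"
    have st3: "stp p (q, R2) (q+1, R3)" using stp_DecS[OF cD, of R2] R2(2) by (simp add: R3_def)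
    define R4 where "R4 = R3(s := Suc (R3 s))"
    have st4: "stp p (q+1, R3) (b+1, R4)" unfolding R4_def by (rule stp_Inc[OF cI])
    have R4v: "R4 s = Suc m" "map R4 ins = xs" "\<forall>r<s. R4 r = R r"
      using R2(3) h insl(2) by (auto simp: R4_def R3_def intro!: map_eq_on)
    obtain R' where R': "reach p (b+1, R4) (ex, R')" "R' s = n" "\<forall>r<s. R' r = R4 r"
      using Suc.IH[rule_format, of "Suc m" R4] R4v h(1) by auto
    have "reach p (b+1, R) (ex, R')" using R2(1) st3 st4 R'(1) by simp
    then show "\<exists>R'. reach p (b+1, R) (ex, R') \<and> R' s = n \<and> (\<forall>r<s. R' r = R r)"
      using R'(2,3) R4v(3) by auto
  qed
qed

lemma Qc_Mu:
  assumes Qf: "\<forall>xs y. eval f xs y \<longrightarrow> Qc f xs y"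
  and ev: "eval (Mu f) xs n"
  shows "Qc (Mu f) xs n"
proof (rule QcI)
  fix ins out s b p R
  assume len: "length ins = length xs" and m: "map R ins = xs" and lt: "\<forall>r\<in>set ins. r < s"
    and o: "out < s" "out \<notin> set ins" and c: "codeat p b (compile (Mu f) ins out s b)"
  from ev have e0: "eval f (n # xs) 0" and eS: "\<forall>m<n. \<exists>k. eval f (m # xs) (Suc k)" by (auto elim: evMuE)
  define cf where "cf = compile f (s # ins) (s+1) (s+2) (b+1)"
  define q where "q = b + 1 + length cf"
  define ex where "ex = q + 2"
  have code: "compile (Mu f) ins out s b = CLR s b @ cf @ [Dec (s+1) (q+1) ex, Inc s (b+1)] @ CLR out ex @ MOVE s out (ex+1)"
    unfolding cf_def q_def ex_def by (simp only: compile.simps Let_def)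
  have cc: "codeat p b (CLR s b) \<and> codeat p (b+1) cf \<and> codeat p (b+1+length cf) [Dec (s+1) (q+1) ex, Inc s (b+1)]
    \<and> codeat p (b+1+length cf+2) (CLR out ex) \<and> codeat p (b+1+length cf+2+1) (MOVE s out (ex+1))"
    using c unfolding code codeat_append length_CLR length_MOVE length_two by blast
  have e: "b+1+length cf = q" "q+2 = ex" by (simp_all add: q_def ex_def)
  have c0: "codeat p b (CLR s b)" "codeat p (b+1) cf" "codeat p q [Dec (s+1) (q+1) ex, Inc s (b+1)]"
    "codeat p ex (CLR out ex)" "codeat p (ex+1) (MOVE s out (ex+1))"
    using cc unfolding e by blast+
  have c1: "codeat p b (CLR s b)" "codeat p (b+1) cf" "codeat p q [Dec (s+1) (q+1) ex]" "codeat p (q+1) [Inc s (b+1)]"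
    "codeat p ex (CLR out ex)" "codeat p (ex+1) (MOVE s out (ex+1))"
    using c0 by (simp_all add: codeat_Cons)
  define R1 where "R1 = R(s := 0)"
  have s1: "reach p (b, R) (b+1, R1)" by (rule reach_eq[OF reach_CLR[OF c1(1), of R]]) (simp_all add: R1_def)
  have mR1: "map R1 ins = xs" using m lt by (auto simp: R1_def intro!: map_eq_on)
  obtain R2 where R2: "reach p (b+1, R1) (ex, R2)" "R2 s = n" "\<forall>r<s. R2 r = R1 r"
    using mu_loop[OF Qf e0 eS len lt c1(2)[unfolded cf_def] q_def[unfolded cf_def] c1(3) c1(4), rule_format, where m=0 and R=R1 and c=n]
      mR1 by (auto simp: R1_def)
  define R3 where "R3 = R2(out := 0)"
  have s3: "reach p (ex, R2) (ex+1, R3)" by (rule reach_eq[OF reach_CLR[OF c1(5), of R2]]) (simp_all add: R3_def)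
  define R4 where "R4 = R3(s := 0, out := R3 out + R3 s)"
  have ne2: "s \<noteq> out" using o by simp
  have s4: "reach p (ex+1, R3) (ex+1+2, R4)" unfolding R4_def by (rule reach_MOVE[OF ne2 c1(6)])
  have len_eq: "b + length (compile (Mu f) ins out s b) = ex + 1 + 2"
    unfolding code by (simp add: ex_def q_def)
  have "reach p (b, R) (b + length (compile (Mu f) ins out s b), R4)"
    unfolding len_eq using s1 R2(1) s3 s4 by simp
  moreover have "R4 out = n" using R2(2) ne2 by (simp add: R4_def R3_def)
  moreover have "\<forall>r<s. r \<noteq> out \<longrightarrow> R4 r = R r"
    using R2(3) by (auto simp: R4_def R3_def R1_def)
  ultimately show "\<exists>R'. reach p (b, R) (b + length (compile (Mu f) ins out s b), R') \<and> R' out = n \<and> (\<forall>r<s. r \<noteq> out \<longrightarrow> R' r = R r)"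
    by blast
qed

theorem compile_correct: "eval f xs y \<Longrightarrow> Qc f xs y"
proof (induction f arbitrary: xs y)
  case Z then show ?case by (auto elim: evZE intro: Qc_Z)
next
  case S then show ?case by (auto elim: evSE intro: Qc_S)
next
  case (Proj i) then show ?case by (auto elim: evProjE intro: Qc_Proj)
next
  case (Comp f gs)
  from Comp.prems obtain ys where L: "list_all2 (\<lambda>g y. eval g xs y) gs ys" and ef: "eval f ys y"
    by (auto elim: evCompE)
  have L': "list_all2 (\<lambda>g y. eval g xs y \<and> Qc g xs y) gs ys"
    using L Comp.IH(2) by (auto simp: list_all2_conv_all_nth dest: nth_mem)
  show ?case by (rule Qc_Comp[OF L' Comp.IH(1)[OF ef]])
next
  case (Prim f g) then show ?case using Qc_Prim by blast
next
  case (Mu f) then show ?case using Qc_Mu by blast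
qed

definition TT :: cform where "TT = Cmp LNil Eq 0"

primrec ANDL :: "cform list \<Rightarrow> cform" where
  "ANDL [] = TT"
| "ANDL (f # fs) = Conj f (ANDL fs)"

definition ORL :: "cform list \<Rightarrow> cform" where "ORL fs = Neg (ANDL (map Neg fs))"

definition IMP :: "cform \<Rightarrow> cform \<Rightarrow> cform" where "IMP f g = Neg (Conj f (Neg g))"

definition SymIn :: "nat list \<Rightarrow> cform" where "SymIn L = ORL (map Sym L)"

definition Diff2 :: "cform \<Rightarrow> cform \<Rightarrow> lsum" where
  "Diff2 A B = LCons 1 (Count A) (LCons (-1) (Count B) LNil)"

lemma sat_TT[simp]: "sat E TT w i" by (simp add: TT_def)

lemma sat_ANDL[simp]: "sat E (ANDL fs) w i \<longleftrightarrow> (\<forall>f\<in>set fs. sat E f w i)"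
  by (induction fs) auto

lemma sat_ORL[simp]: "sat E (ORL fs) w i \<longleftrightarrow> (\<exists>f\<in>set fs. sat E f w i)"
  by (simp add: ORL_def)

lemma sat_IMP[simp]: "sat E (IMP f g) w i \<longleftrightarrow> (sat E f w i \<longrightarrow> sat E g w i)"
  by (simp add: IMP_def)

lemma sat_SymIn[simp]: "sat E (SymIn L) w i \<longleftrightarrow> 1 \<le> i \<and> i \<le> length w \<and> w ! (i - 1) \<in> set L"
  by (auto simp: SymIn_def)

definition cnt :: "(nat \<Rightarrow> bool) \<Rightarrow> nat list \<Rightarrow> nat" where
  "cnt P u = length (filter P u)"

lemma cnt_append[simp]: "cnt P (u @ v) = cnt P u + cnt P v" by (simp add: cnt_def)
lemma cnt_Nil[simp]: "cnt P [] = 0" by (simp add: cnt_def)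
lemma cnt_single[simp]: "cnt P [a] = (if P a then 1 else 0)" by (simp add: cnt_def)

lemma card_pos: "card {j. 1 \<le> j \<and> j \<le> i \<and> (1 \<le> j \<and> j \<le> length w \<and> P (w ! (j - 1)))} = cnt P (take i w)"
proof (induction i)
  case 0 then show ?case by simp
next
  case (Suc i)
  have eq: "{j. 1 \<le> j \<and> j \<le> Suc i \<and> (1 \<le> j \<and> j \<le> length w \<and> P (w ! (j - 1)))}
      = {j. 1 \<le> j \<and> j \<le> i \<and> (1 \<le> j \<and> j \<le> length w \<and> P (w ! (j - 1)))}
        \<union> (if Suc i \<le> length w \<and> P (w ! i) then {Suc i} else {})"
    by (auto simp: le_Suc_eq)
  show ?case
  proof (cases "i < length w")
    case True
    have "take (Suc i) w = take i w @ [w ! i]" using True by (simp add: take_Suc_conv_app_nth)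
    then show ?thesis using True Suc.IH unfolding eq by (auto simp: card_insert_if)
  next
    case False
    then show ?thesis using Suc.IH unfolding eq by simp
  qed
qed

lemma tval_Count_SymIn[simp]: "tval E (Count (SymIn L)) w i = int (cnt (\<lambda>a. a \<in> set L) (take i w))"
  using card_pos[of i w "\<lambda>a. a \<in> set L"] by simp

lemma tval_Count_Sym[simp]: "tval E (Count (Sym a)) w i = int (cnt (\<lambda>b. b = a) (take i w))"
  using card_pos[of i w "\<lambda>b. b = a"] by simp

lemma lval_Diff2[simp]: "lval E (Diff2 (SymIn A) (SymIn B)) w i
   = int (cnt (\<lambda>a. a \<in> set A) (take i w)) - int (cnt (\<lambda>a. a \<in> set B) (take i w))"
  unfolding Diff2_def lval.simps tval_Count_SymIn by simp

section \<open>Symbols for a register machine\<close>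

definition lab :: "nat \<Rightarrow> nat" where "lab a = (a - 1) div 2"
definition zb :: "nat \<Rightarrow> bool" where "zb a \<longleftrightarrow> (a - 1) mod 2 = 1"

primrec isDec :: "instr \<Rightarrow> bool" where
  "isDec (Inc r l) = False" | "isDec (Dec r l1 l2) = True"

definition valid :: "instr list \<Rightarrow> nat \<Rightarrow> bool" where
  "valid p a \<longleftrightarrow> a = 0 \<or> (lab a < length p \<and> (zb a \<longrightarrow> isDec (p ! lab a)))"

definition syms :: "instr list \<Rightarrow> nat list" where
  "syms p = filter (valid p) [0..<2 * length p + 1]"

lemma valid_bound: "valid p a \<Longrightarrow> a < 2 * length p + 1"
  unfolding valid_def lab_def by auto

lemma set_syms[simp]: "set (syms p) = {a. valid p a}"
proof (rule set_eqI)
  fix a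
  have 1: "a \<in> set (syms p) \<longleftrightarrow> a \<in> set [0..<2 * length p + 1] \<and> valid p a"
    unfolding syms_def set_filter by blast
  have 2: "valid p a \<Longrightarrow> a \<in> set [0..<2 * length p + 1]"
    using valid_bound[of p a] by (simp only: set_upt atLeastLessThan_iff) simp
  show "a \<in> set (syms p) \<longleftrightarrow> a \<in> {a. valid p a}"
    using 1 2 by blast
qed

definition lst :: "(nat \<Rightarrow> bool) \<Rightarrow> instr list \<Rightarrow> nat list" where
  "lst P p = filter P (syms p)"

lemma set_lst[simp]: "a \<in> set (lst P p) \<longleftrightarrow> valid p a \<and> P a"
  by (auto simp: lst_def)

definition tgt :: "instr list \<Rightarrow> nat \<Rightarrow> nat" where
  "tgt p a = (if a = 0 then 0 else case p ! lab a of Inc r l \<Rightarrow> l | Dec r l1 l2 \<Rightarrow> if zb a then l2 else l1)"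

definition incs :: "instr list \<Rightarrow> nat \<Rightarrow> nat \<Rightarrow> bool" where
  "incs p r a \<longleftrightarrow> (if a = 0 then r = 0 else (case p ! lab a of Inc r' l \<Rightarrow> r' = r | Dec r' l1 l2 \<Rightarrow> False))"

definition decs :: "instr list \<Rightarrow> nat \<Rightarrow> nat \<Rightarrow> bool" where
  "decs p r a \<longleftrightarrow> a \<noteq> 0 \<and> \<not> zb a \<and> (case p ! lab a of Inc r' l \<Rightarrow> False | Dec r' l1 l2 \<Rightarrow> r' = r)"

definition zts :: "instr list \<Rightarrow> nat \<Rightarrow> nat \<Rightarrow> bool" where
  "zts p r a \<longleftrightarrow> a \<noteq> 0 \<and> zb a \<and> (case p ! lab a of Inc r' l \<Rightarrow> False | Dec r' l1 l2 \<Rightarrow> r' = r)"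

primrec tmax :: "instr \<Rightarrow> nat" where
  "tmax (Inc r l) = l" | "tmax (Dec r l1 l2) = l1 + l2"

primrec rmax :: "instr \<Rightarrow> nat" where
  "rmax (Inc r l) = r" | "rmax (Dec r l1 l2) = r"

definition QB :: "instr list \<Rightarrow> nat" where "QB p = Suc (length p + sum_list (map tmax p))"
definition RB :: "instr list \<Rightarrow> nat" where "RB p = Suc (sum_list (map rmax p))"

definition bal :: "instr list \<Rightarrow> nat \<Rightarrow> nat list \<Rightarrow> int" where
  "bal p q u = (if q = 0 then 1 else 0) + int (cnt (\<lambda>a. valid p a \<and> a \<noteq> 0 \<and> tgt p a = q) u)
     - int (cnt (\<lambda>a. valid p a \<and> a \<noteq> 0 \<and> lab a = q) u)"

definition val :: "instr list \<Rightarrow> nat \<Rightarrow> nat list \<Rightarrow> int" where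
  "val p r u = int (cnt (\<lambda>a. valid p a \<and> incs p r a) u) - int (cnt (\<lambda>a. valid p a \<and> decs p r a) u)"

definition GoodP :: "instr list \<Rightarrow> nat \<Rightarrow> nat list \<Rightarrow> bool" where
  "GoodP p x u \<longleftrightarrow> valid p (last u) \<and> (last u = 0 \<longrightarrow> (\<forall>a\<in>set (butlast u). a = 0))
    \<and> (last u \<noteq> 0 \<longrightarrow> cnt (\<lambda>a. a = 0) u = x)
    \<and> (\<forall>q<QB p. bal p q u = (if valid p (last u) \<and> tgt p (last u) = q then 1 else 0))
    \<and> (\<forall>r<RB p. 0 \<le> val p r u)
    \<and> (\<forall>r<RB p. valid p (last u) \<and> zts p r (last u) \<longrightarrow> val p r u = 0)"

definition AccP :: "instr list \<Rightarrow> nat \<Rightarrow> nat \<Rightarrow> nat list \<Rightarrow> bool" where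
  "AccP p x H w \<longleftrightarrow> w \<noteq> [] \<and> (\<forall>i. 1 \<le> i \<and> i \<le> length w \<longrightarrow> GoodP p x (take i w))
     \<and> valid p (last w) \<and> tgt p (last w) = H"

definition line0 :: "nat \<Rightarrow> cform" where
  "line0 x = Cmp (LCons 1 (Count (Sym 0)) LNil) Eq (int x)"

definition BalF :: "instr list \<Rightarrow> nat \<Rightarrow> cform" where
  "BalF p q = ORL [Conj (SymIn (lst (\<lambda>a. tgt p a = q) p))
        (Cmp (Diff2 (SymIn (lst (\<lambda>a. a \<noteq> 0 \<and> tgt p a = q) p)) (SymIn (lst (\<lambda>a. a \<noteq> 0 \<and> lab a = q) p))) Eq (1 - (if q = 0 then 1 else 0))),
      Conj (Neg (SymIn (lst (\<lambda>a. tgt p a = q) p)))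
        (Cmp (Diff2 (SymIn (lst (\<lambda>a. a \<noteq> 0 \<and> tgt p a = q) p)) (SymIn (lst (\<lambda>a. a \<noteq> 0 \<and> lab a = q) p))) Eq (- (if q = 0 then 1 else 0)))]"

definition ValF :: "instr list \<Rightarrow> nat \<Rightarrow> lsum" where
  "ValF p r = Diff2 (SymIn (lst (incs p r) p)) (SymIn (lst (decs p r) p))"

definition NonNegF :: "instr list \<Rightarrow> nat \<Rightarrow> cform" where
  "NonNegF p r = Cmp (ValF p r) Ge 0"

definition ZeroF :: "instr list \<Rightarrow> nat \<Rightarrow> cform" where
  "ZeroF p r = IMP (SymIn (lst (zts p r) p)) (Cmp (ValF p r) Eq 0)"

definition LoadF :: cform where
  "LoadF = Conj (IMP (Sym 0) (Neg (Prev (Neg (Sym 0))))) (IMP (Neg (Sym 0)) (Ref 0))"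

definition GoodF :: "instr list \<Rightarrow> cform" where
  "GoodF p = ANDL ([SymIn (syms p), LoadF] @ map (BalF p) [0..<QB p] @ map (NonNegF p) [0..<RB p] @ map (ZeroF p) [0..<RB p])"

definition mainF :: "instr list \<Rightarrow> nat \<Rightarrow> cform" where
  "mainF p H = Conj (Hist (GoodF p)) (SymIn (lst (\<lambda>a. tgt p a = H) p))"

lemma last_take: "1 \<le> i \<Longrightarrow> i \<le> length w \<Longrightarrow> last (take i w) = w ! (i - 1)"
proof -
  assume i: "1 \<le> i" "i \<le> length w"
  have ne: "take i w \<noteq> []" using i by auto
  have "last (take i w) = take i w ! (length (take i w) - 1)" by (rule last_conv_nth[OF ne])
  also have "\<dots> = w ! (i - 1)" using i by (simp add: min_def)
  finally show ?thesis .
qed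

lemma butlast_take': "i \<le> length w \<Longrightarrow> butlast (take i w) = take (i - 1) w"
  by (simp add: butlast_take)

lemma sat_Ref0: "sat [sat [] (line0 x)] (Ref 0) w i \<longleftrightarrow> cnt (\<lambda>b. b = 0) (take i w) = x"
  unfolding line0_def using card_pos[of i w "\<lambda>b. b = 0"] by simp

lemma sat_BalF: "1 \<le> i \<Longrightarrow> i \<le> length w \<Longrightarrow>
   sat E (BalF p q) w i \<longleftrightarrow> bal p q (take i w) = (if valid p (w ! (i - 1)) \<and> tgt p (w ! (i - 1)) = q then 1 else 0)"
  unfolding BalF_def bal_def by (simp only: sat_ORL sat.simps lval_Diff2 set_lst sat_SymIn) auto

lemma sat_NonNegF: "sat E (NonNegF p r) w i \<longleftrightarrow> 0 \<le> val p r (take i w)"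
  unfolding NonNegF_def ValF_def val_def by (simp only: sat.simps lval_Diff2 set_lst) auto

lemma sat_ZeroF: "1 \<le> i \<Longrightarrow> i \<le> length w \<Longrightarrow>
   sat E (ZeroF p r) w i \<longleftrightarrow> (valid p (w ! (i - 1)) \<and> zts p r (w ! (i - 1)) \<longrightarrow> val p r (take i w) = 0)"
  unfolding ZeroF_def ValF_def val_def by (simp only: sat_IMP sat.simps lval_Diff2 set_lst sat_SymIn) auto

lemma sat_Prev_nz: "i \<le> length w \<Longrightarrow> sat E (Prev (Neg (Sym 0))) w i \<longleftrightarrow> (\<exists>a\<in>set (take (i - 1) w). a \<noteq> 0)"
proof
  assume i: "i \<le> length w" and "sat E (Prev (Neg (Sym 0))) w i"
  then obtain j where j: "1 \<le> j" "j < i" "w ! (j - 1) \<noteq> 0" by auto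
  have "j - 1 < length (take (i - 1) w)" using j i by simp
  moreover have "take (i - 1) w ! (j - 1) = w ! (j - 1)" using j by simp
  ultimately have "w ! (j - 1) \<in> set (take (i - 1) w)" by (metis nth_mem)
  then show "\<exists>a\<in>set (take (i - 1) w). a \<noteq> 0" using j by blast
next
  assume i: "i \<le> length w" and "\<exists>a\<in>set (take (i - 1) w). a \<noteq> 0"
  then obtain k where k: "k < length (take (i - 1) w)" "take (i - 1) w ! k \<noteq> 0" by (auto simp: in_set_conv_nth)
  then have "1 \<le> Suc k" "Suc k < i" "w ! (Suc k - 1) \<noteq> 0" by auto
  then show "sat E (Prev (Neg (Sym 0))) w i" by (auto intro!: exI[of _ "Suc k"])
qed

lemma sat_LoadF: "1 \<le> i \<Longrightarrow> i \<le> length w \<Longrightarrow>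
  sat [sat [] (line0 x)] LoadF w i \<longleftrightarrow> (w ! (i - 1) = 0 \<longrightarrow> (\<forall>a\<in>set (take (i - 1) w). a = 0))
     \<and> (w ! (i - 1) \<noteq> 0 \<longrightarrow> cnt (\<lambda>a. a = 0) (take i w) = x)"
  unfolding LoadF_def by (simp only: sat_IMP sat.simps(5,6) sat_Prev_nz sat_Ref0) auto

lemma sat_GoodF: "1 \<le> i \<Longrightarrow> i \<le> length w \<Longrightarrow> sat [sat [] (line0 x)] (GoodF p) w i \<longleftrightarrow> GoodP p x (take i w)"
proof -
  assume i: "1 \<le> i" "i \<le> length w"
  let ?E = "[sat [] (line0 x)]"
  have "sat ?E (GoodF p) w i \<longleftrightarrow> sat ?E (SymIn (syms p)) w i \<and> sat ?E LoadF w i \<and> (\<forall>q<QB p. sat ?E (BalF p q) w i)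
     \<and> (\<forall>r<RB p. sat ?E (NonNegF p r) w i) \<and> (\<forall>r<RB p. sat ?E (ZeroF p r) w i)"
    unfolding GoodF_def sat_ANDL by auto
  also have "\<dots> \<longleftrightarrow> GoodP p x (take i w)"
    unfolding GoodP_def sat_SymIn sat_LoadF[OF i] sat_BalF[OF i] sat_NonNegF sat_ZeroF[OF i] last_take[OF i] butlast_take'[OF i(2)]
    using i by auto
  finally show ?thesis .
qed

lemma accepts_iff: "accepts [line0 x, mainF p H] w \<longleftrightarrow> AccP p x H w"
proof -
  have pd: "prog_den [line0 x, mainF p H] = [sat [] (line0 x), sat [sat [] (line0 x)] (mainF p H)]"
    by (simp add: prog_den_def)
  have "accepts [line0 x, mainF p H] w \<longleftrightarrow> sat [sat [] (line0 x)] (mainF p H) w (length w)"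
    unfolding accepts_def pd by simp
  also have "\<dots> \<longleftrightarrow> (\<forall>j. 1 \<le> j \<and> j \<le> length w \<longrightarrow> sat [sat [] (line0 x)] (GoodF p) w j)
      \<and> (1 \<le> length w \<and> valid p (w ! (length w - 1)) \<and> tgt p (w ! (length w - 1)) = H)"
    unfolding mainF_def by (simp only: sat.simps sat_SymIn set_lst) auto
  also have "\<dots> \<longleftrightarrow> AccP p x H w"
  proof -
    have "w \<noteq> [] \<Longrightarrow> last w = w ! (length w - 1)" by (rule last_conv_nth)
    then show ?thesis unfolding AccP_def using sat_GoodF[of _ w x p]
      by (cases w) auto
  qed
  finally show ?thesis .
qed

lemma cnt_replicate[simp]: "cnt P (replicate n a) = (if P a then n else 0)"
  by (induction n) (auto simp: cnt_def)

lemma cnt_none: "(\<And>a. \<not> P a) \<Longrightarrow> cnt P u = 0"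
  by (simp add: cnt_def)

lemma member_le_sum_list_nat: "(a::nat) \<in> set xs \<Longrightarrow> a \<le> sum_list xs"
  by (induction xs) auto

lemma rmax_RB: "i < length p \<Longrightarrow> rmax (p ! i) < RB p"
  unfolding RB_def using member_le_sum_list_nat[of "rmax (p ! i)" "map rmax p"] by auto

lemma tmax_QB: "i < length p \<Longrightarrow> tmax (p ! i) < QB p"
  unfolding QB_def using member_le_sum_list_nat[of "tmax (p ! i)" "map tmax p"] by auto

lemma lab_lt: "valid p a \<Longrightarrow> a \<noteq> 0 \<Longrightarrow> lab a < length p"
  by (simp add: valid_def)

lemma lab_QB: "valid p a \<Longrightarrow> a \<noteq> 0 \<Longrightarrow> lab a < QB p"
  using lab_lt[of p a] by (simp add: QB_def)

lemma incs_RB: "valid p a \<Longrightarrow> incs p r a \<Longrightarrow> r < RB p"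
proof (cases "a = 0")
  case True then show "incs p r a \<Longrightarrow> r < RB p" by (simp add: incs_def RB_def)
next
  case False
  assume v: "valid p a" and i: "incs p r a"
  have l: "lab a < length p" using lab_lt[OF v False] .
  then show ?thesis using i False rmax_RB[OF l] by (cases "p ! lab a") (auto simp: incs_def)
qed

lemma decs_RB: "valid p a \<Longrightarrow> decs p r a \<Longrightarrow> r < RB p"
proof -
  assume v: "valid p a" and i: "decs p r a"
  then have a: "a \<noteq> 0" by (simp add: decs_def)
  have l: "lab a < length p" using lab_lt[OF v a] .
  then show ?thesis using i rmax_RB[OF l] by (cases "p ! lab a") (auto simp: decs_def)
qed

lemma zts_RB: "valid p a \<Longrightarrow> zts p r a \<Longrightarrow> r < RB p"
proof -
  assume v: "valid p a" and i: "zts p r a"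
  then have a: "a \<noteq> 0" by (simp add: zts_def)
  have l: "lab a < length p" using lab_lt[OF v a] .
  then show ?thesis using i rmax_RB[OF l] by (cases "p ! lab a") (auto simp: zts_def)
qed

lemma val_big: "RB p \<le> r \<Longrightarrow> val p r u = 0"
proof -
  assume r: "RB p \<le> r"
  have "cnt (\<lambda>a. valid p a \<and> incs p r a) u = 0" by (rule cnt_none) (use incs_RB r in fastforce)
  moreover have "cnt (\<lambda>a. valid p a \<and> decs p r a) u = 0" by (rule cnt_none) (use decs_RB r in fastforce)
  ultimately show ?thesis by (simp add: val_def)
qed

lemma bal_snoc: "bal p q (u @ [a]) = bal p q u + (if valid p a \<and> a \<noteq> 0 \<and> tgt p a = q then 1 else 0)
   - (if valid p a \<and> a \<noteq> 0 \<and> lab a = q then 1 else 0)"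
  by (simp add: bal_def)

lemma val_snoc: "val p r (u @ [a]) = val p r u + (if valid p a \<and> incs p r a then 1 else 0)
   - (if valid p a \<and> decs p r a then 1 else 0)"
  by (simp add: val_def)

lemma bal_rep: "bal p q (replicate n 0) = (if q = 0 then 1 else 0)"
  by (simp add: bal_def)

lemma val_rep: "val p r (replicate n 0) = (if r = 0 then int n else 0)"
  by (simp add: val_def valid_def incs_def decs_def)

lemma tgt0[simp]: "tgt p 0 = 0" by (simp add: tgt_def)
lemma valid0[simp]: "valid p 0" by (simp add: valid_def)

lemma lab_code[simp]: "lab (Suc (2 * l)) = l" "lab (Suc (Suc (2 * l))) = l"
  by (simp_all add: lab_def)
lemma zb_code[simp]: "\<not> zb (Suc (2 * l))" "zb (Suc (Suc (2 * l)))"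
  by (simp_all add: zb_def)

lemma sym_of_step:
  assumes "step p (l, R) = Some (l', R')"
  shows "\<exists>a. a \<noteq> 0 \<and> valid p a \<and> lab a = l \<and> tgt p a = l'
     \<and> (\<forall>r. int (R' r) = int (R r) + (if incs p r a then 1 else 0) - (if decs p r a then 1 else 0))
     \<and> (\<forall>r. zts p r a \<longrightarrow> R r = 0)"
proof -
  have l: "l < length p" using assms by (simp split: if_splits)
  show ?thesis
  proof (cases "p ! l")
    case (Inc r t)
    then have [simp]: "l' = t" "R' = R(r := Suc (R r))" using assms l by auto
    show ?thesis using l Inc
      by (intro exI[of _ "2 * l + 1"]) (auto simp: valid_def tgt_def incs_def decs_def zts_def)
  next
    case (Dec r l1 l2)
    show ?thesis
    proof (cases "R r = 0")
      case True
      then have [simp]: "l' = l2" "R' = R" using assms l Dec by auto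
      show ?thesis using l Dec True
        by (intro exI[of _ "2 * l + 2"]) (auto simp: valid_def tgt_def incs_def decs_def zts_def)
    next
      case False
      then have [simp]: "l' = l1" "R' = R(r := R r - 1)" using assms l Dec by auto
      show ?thesis using l Dec False
        by (intro exI[of _ "2 * l + 1"]) (auto simp: valid_def tgt_def incs_def decs_def zts_def of_nat_diff)
    qed
  qed
qed


section \<open>From runs to words\<close>

definition InvB :: "instr list \<Rightarrow> nat \<Rightarrow> nat list \<Rightarrow> nat \<Rightarrow> (nat \<Rightarrow> nat) \<Rightarrow> bool" where
  "InvB p x u l R \<longleftrightarrow> (\<forall>q. bal p q u = (if q = l then 1 else 0)) \<and> (\<forall>r. int (R r) = val p r u)
     \<and> (\<forall>i. 1 \<le> i \<and> i \<le> length u \<longrightarrow> GoodP p x (take i u))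
     \<and> (\<exists>v. u = replicate x 0 @ v \<and> (\<forall>a\<in>set v. a \<noteq> 0 \<and> valid p a) \<and> (v = [] \<longrightarrow> l = 0) \<and> (v \<noteq> [] \<longrightarrow> tgt p (last v) = l))"

lemma zts_no_incdec: "zts p r a \<Longrightarrow> \<not> incs p r' a \<and> \<not> decs p r' a"
  by (cases "p ! lab a") (auto simp: zts_def incs_def decs_def)

lemma GoodP_rep: "1 \<le> i \<Longrightarrow> GoodP p x (replicate i 0)"
  unfolding GoodP_def by (auto simp: bal_rep val_rep zts_def dest: in_set_butlastD)

lemma InvB_init: "InvB p x (replicate x 0) 0 ((\<lambda>_. 0)(0 := x))"
  unfolding InvB_def by (auto simp: bal_rep val_rep GoodP_rep intro!: exI[of _ "[]"])

lemma InvB_step: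
  assumes I: "InvB p x u l R" and st: "step p (l, R) = Some (l', R')"
  shows "InvB p x (u @ [a']) l' R' \<or> (\<exists>u'. InvB p x u' l' R')"
proof -
  obtain a where a: "a \<noteq> 0" "valid p a" "lab a = l" "tgt p a = l'"
    "\<forall>r. int (R' r) = int (R r) + (if incs p r a then 1 else 0) - (if decs p r a then 1 else 0)"
    "\<forall>r. zts p r a \<longrightarrow> R r = 0"
    using sym_of_step[OF st] by blast
  from I have Ib: "\<forall>q. bal p q u = (if q = l then 1 else 0)" and Iv: "\<forall>r. int (R r) = val p r u"
    and Ig: "\<forall>i. 1 \<le> i \<and> i \<le> length u \<longrightarrow> GoodP p x (take i u)"
    and Iw: "\<exists>v. u = replicate x 0 @ v \<and> (\<forall>a\<in>set v. a \<noteq> 0 \<and> valid p a) \<and> (v = [] \<longrightarrow> l = 0) \<and> (v \<noteq> [] \<longrightarrow> tgt p (last v) = l)"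
    unfolding InvB_def by blast+
  obtain v where v: "u = replicate x 0 @ v" "\<forall>a\<in>set v. a \<noteq> 0 \<and> valid p a" by (metis Iw)
  have b': "\<forall>q. bal p q (u @ [a]) = (if q = l' then 1 else 0)"
    using Ib a(1-4) by (auto simp: bal_snoc)
  have v': "\<forall>r. int (R' r) = val p r (u @ [a])"
    using Iv a(2,5) by (auto simp: val_snoc)
  have c0: "cnt (\<lambda>b. b = 0) (u @ [a]) = x"
  proof -
    have "cnt (\<lambda>b. b = 0) v = 0" using v(2) by (simp add: cnt_def filter_empty_conv)
    then show ?thesis using v(1) a(1) by simp
  qed
  have gl: "GoodP p x (u @ [a])"
    unfolding GoodP_def
  proof (intro conjI allI impI)
    show "valid p (last (u @ [a]))" using a(2) by simp
    show "\<forall>b\<in>set (butlast (u @ [a])). b = 0" if "last (u @ [a]) = 0" using that a(1) by simp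
    show "cnt (\<lambda>b. b = 0) (u @ [a]) = x" by (rule c0)
    fix q assume "q < QB p"
    show "bal p q (u @ [a]) = (if valid p (last (u @ [a])) \<and> tgt p (last (u @ [a])) = q then 1 else 0)"
      using b' a(2,4) by auto
  next
    fix r assume "r < RB p"
    show "0 \<le> val p r (u @ [a])" using v'[rule_format, of r] by simp
  next
    fix r assume "r < RB p" "valid p (last (u @ [a])) \<and> zts p r (last (u @ [a]))"
    then have z: "zts p r a" by simp
    then show "val p r (u @ [a]) = 0" using v'[rule_format, of r] a(5,6) zts_no_incdec[OF z, of r] by auto
  qed
  have g': "\<forall>i. 1 \<le> i \<and> i \<le> length (u @ [a]) \<longrightarrow> GoodP p x (take i (u @ [a]))"
  proof (intro allI impI)
    fix i assume i: "1 \<le> i \<and> i \<le> length (u @ [a])"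
    show "GoodP p x (take i (u @ [a]))"
    proof (cases "i \<le> length u")
      case True then show ?thesis using Ig i by simp
    next
      case False then have "i = length u + 1" using i by simp
      then show ?thesis using gl by simp
    qed
  qed
  have w': "u @ [a] = replicate x 0 @ (v @ [a]) \<and> (\<forall>b\<in>set (v @ [a]). b \<noteq> 0 \<and> valid p b) \<and> (v @ [a] = [] \<longrightarrow> l' = 0)
     \<and> (v @ [a] \<noteq> [] \<longrightarrow> tgt p (last (v @ [a])) = l')"
    using v a by simp
  have "InvB p x (u @ [a]) l' R'" unfolding InvB_def using b' v' g' w' by blast
  then show ?thesis by blast
qed

lemma run_to_word: "reach p c0 c \<Longrightarrow> c0 = (0, (\<lambda>_. 0)(0 := x)) \<Longrightarrow> \<exists>u. InvB p x u (fst c) (snd c)"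
proof (induction rule: rtranclp_induct)
  case base
  then have "c0 = (0, (\<lambda>_. 0)(0 := x))" by blast
  then show ?case using InvB_init[of p x] by (metis fst_conv snd_conv)
next
  case (step y z)
  then obtain u where "InvB p x u (fst y) (snd y)" by blast
  moreover have "step p (fst y, snd y) = Some (fst z, snd z)" using step.hyps(2) by (simp add: stp_def)
  ultimately show ?case using InvB_step by blast
qed

lemma word_of_run:
  assumes "reach p (0, (\<lambda>_. 0)(0 := x)) (H, R)" "H \<noteq> 0"
  shows "\<exists>w. AccP p x H w \<and> (\<forall>a\<in>set w. valid p a)"
proof -
  obtain u where I: "InvB p x u H R" using run_to_word[OF assms(1)] by auto
  then obtain v where v: "u = replicate x 0 @ v" "\<forall>a\<in>set v. a \<noteq> 0 \<and> valid p a" "v = [] \<longrightarrow> H = 0" "v \<noteq> [] \<longrightarrow> tgt p (last v) = H"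
    and g: "\<forall>i. 1 \<le> i \<and> i \<le> length u \<longrightarrow> GoodP p x (take i u)"
    unfolding InvB_def by blast
  have vne: "v \<noteq> []" using v(3) assms(2) by blast
  have "AccP p x H u" unfolding AccP_def using g v(1,2,4) vne by auto
  moreover have "\<forall>a\<in>set u. valid p a" using v(1,2) by auto
  ultimately show ?thesis by blast
qed


section \<open>From words to runs\<close>

lemma val_nonneg: "(\<forall>r<RB p. 0 \<le> val p r u) \<Longrightarrow> 0 \<le> val p r u"
  by (cases "r < RB p") (auto simp: val_big)

lemma word_step:
  assumes a: "a \<noteq> 0" "valid p a" and g: "GoodP p x (u @ [a])"
    and bu: "\<forall>q<QB p. bal p q u = (if q = l then 1 else 0)"
    and nn: "\<forall>r. 0 \<le> val p r u"
  shows "step p (l, \<lambda>r. nat (val p r u)) = Some (tgt p a, \<lambda>r. nat (val p r (u @ [a])))"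
proof -
  define l0 where "l0 = lab a"
  have l0p: "l0 < length p" using lab_lt[OF a(2) a(1)] by (simp add: l0_def)
  have l0q: "l0 < QB p" using lab_QB[OF a(2) a(1)] by (simp add: l0_def)
  from g have gb: "\<forall>q<QB p. bal p q (u @ [a]) = (if tgt p a = q then 1 else 0)"
    and gn: "\<forall>r<RB p. 0 \<le> val p r (u @ [a])"
    and gz: "\<forall>r<RB p. zts p r a \<longrightarrow> val p r (u @ [a]) = 0"
    using a(2) unfolding GoodP_def by auto
  have "bal p l0 (u @ [a]) = bal p l0 u + (if tgt p a = l0 then 1 else 0) - 1"
    using a by (simp add: bal_snoc l0_def)
  then have "bal p l0 u = 1" using gb l0q by auto
  then have ll: "l = l0" using bu l0q by (auto split: if_splits)
  show ?thesis
  proof (cases "p ! l0")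
    case (Inc r t)
    have nz: "\<not> zb a" using a Inc by (auto simp: valid_def l0_def)
    have tg: "tgt p a = t" using a(1) Inc by (simp add: tgt_def l0_def)
    have vv: "\<And>r'. val p r' (u @ [a]) = val p r' u + (if r' = r then 1 else 0)"
      using a Inc by (simp add: val_snoc incs_def decs_def l0_def)
    have "(\<lambda>r'. nat (val p r' (u @ [a]))) = (\<lambda>r'. nat (val p r' u))(r := Suc (nat (val p r u)))"
      using nn by (auto simp: vv fun_eq_iff nat_add_distrib)
    then show ?thesis using l0p Inc ll tg by simp
  next
    case (Dec r l1 l2)
    show ?thesis
    proof (cases "zb a")
      case True
      have tg: "tgt p a = l2" using a(1) Dec True by (simp add: tgt_def l0_def)
      have vv: "\<And>r'. val p r' (u @ [a]) = val p r' u"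
        using a Dec True by (simp add: val_snoc incs_def decs_def l0_def)
      have zt: "zts p r a" using a(1) Dec True by (simp add: zts_def l0_def)
      have "r < RB p" using rmax_RB[OF l0p] Dec by simp
      then have "val p r u = 0" using gz zt vv by simp
      then show ?thesis using l0p Dec ll tg vv by simp
    next
      case False
      have tg: "tgt p a = l1" using a(1) Dec False by (simp add: tgt_def l0_def)
      have vv: "\<And>r'. val p r' (u @ [a]) = val p r' u - (if r' = r then 1 else 0)"
        using a Dec False by (simp add: val_snoc incs_def decs_def l0_def)
      have "r < RB p" using rmax_RB[OF l0p] Dec by simp
      then have "0 \<le> val p r u - 1" using gn[rule_format, OF \<open>r < RB p\<close>] vv[of r] by simp
      then have pos: "nat (val p r u) \<noteq> 0" by simp
      have "(\<lambda>r'. nat (val p r' (u @ [a]))) = (\<lambda>r'. nat (val p r' u))(r := nat (val p r u) - 1)"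
        using nn by (auto simp: vv fun_eq_iff nat_diff_distrib)
      then show ?thesis using l0p Dec ll tg pos by simp
    qed
  qed
qed

lemma word_decomp:
  assumes acc: "AccP p x H w" and H: "H \<noteq> 0"
  shows "\<exists>v. w = replicate x 0 @ v \<and> v \<noteq> [] \<and> (\<forall>a\<in>set v. a \<noteq> 0 \<and> valid p a)"
proof -
  from acc have wne: "w \<noteq> []" and g: "\<And>i. 1 \<le> i \<Longrightarrow> i \<le> length w \<Longrightarrow> GoodP p x (take i w)"
    and tl: "tgt p (last w) = H" unfolding AccP_def by auto
  have gj: "GoodP p x (take (Suc j) w)" if "j < length w" for j using g that by simp
  have lt: "last (take (Suc j) w) = w ! j" if "j < length w" for j
    using last_take[of "Suc j" w] that by simp
  have vj: "valid p (w ! j)" if "j < length w" for j using gj[OF that] lt[OF that] unfolding GoodP_def by simp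
  define k where "k = length (takeWhile (\<lambda>a. a = 0) w)"
  define v where "v = dropWhile (\<lambda>a. a = 0) w"
  have tw: "takeWhile (\<lambda>a. a = 0) w = replicate k 0"
    unfolding k_def by (metis (mono_tags, lifting) replicate_length_same set_takeWhileD)
  have wsplit: "w = replicate k 0 @ v" using takeWhile_dropWhile_id[of "\<lambda>a. a = 0" w] tw v_def by simp
  have lw: "last w \<noteq> 0" using tl H by (metis tgt0)
  have vne: "v \<noteq> []"
  proof
    assume "v = []" then have w0: "w = replicate k 0" using wsplit by simp
    then have "k \<noteq> 0" using wne by auto
    then have "last w = 0" using w0 by (simp add: last_replicate)
    then show False using lw by simp
  qed
  have klt: "k < length w" using wsplit vne by (metis length_append length_greater_0_conv length_replicate less_add_same_cancel1)
  have "w ! k = v ! 0" using wsplit by (metis length_replicate nth_append_length_plus add_0_right)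
  moreover have "v ! 0 = hd v" using vne by (simp add: hd_conv_nth)
  moreover have "hd v \<noteq> 0" using hd_dropWhile[of "\<lambda>a. a = 0" w] vne unfolding v_def by simp
  ultimately have wk: "w ! k \<noteq> 0" by simp
  have nz: "w ! j \<noteq> 0" if "k \<le> j" "j < length w" for j
  proof
    assume wj: "w ! j = 0"
    then have "j \<noteq> k" using wk by auto
    then have kj: "k < j" using that by simp
    have "\<forall>a\<in>set (butlast (take (Suc j) w)). a = 0" using gj[OF that(2)] lt[OF that(2)] wj unfolding GoodP_def by simp
    moreover have "butlast (take (Suc j) w) = take j w" using butlast_take'[of "Suc j" w] that by simp
    moreover have "w ! k \<in> set (take j w)" using kj that by (metis in_set_conv_nth length_take min.absorb4 nth_take)
    ultimately show False using wk by simp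
  qed
  have "cnt (\<lambda>a. a = 0) (take (Suc k) w) = x" using gj[OF klt] lt[OF klt] wk unfolding GoodP_def by simp
  moreover have "take (Suc k) w = replicate k 0 @ [w ! k]" using wsplit klt
    by (metis length_replicate take_Suc_conv_app_nth take_all_iff take_append le_refl diff_self_eq_0 take0 append_Nil2)
  ultimately have kx: "k = x" using wk by simp
  have "\<forall>a\<in>set v. a \<noteq> 0 \<and> valid p a"
  proof
    fix a assume "a \<in> set v"
    then obtain i where i: "i < length v" "v ! i = a" by (auto simp: in_set_conv_nth)
    have "w ! (k + i) = a" using wsplit i by (simp add: nth_append)
    moreover have "k + i < length w" using wsplit i by simp
    ultimately show "a \<noteq> 0 \<and> valid p a" using nz vj by auto
  qed
  then show ?thesis using wsplit kx vne by blast
qed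


lemma run_of_word:
  assumes acc: "AccP p x H w" and H: "H \<noteq> 0"
  shows "\<exists>R'. reach p (0, (\<lambda>_. 0)(0 := x)) (H, R')"
proof -
  obtain v where v: "w = replicate x 0 @ v" "v \<noteq> []" "\<forall>a\<in>set v. a \<noteq> 0 \<and> valid p a"
    using word_decomp[OF acc H] by blast
  from acc have g: "\<And>i. 1 \<le> i \<Longrightarrow> i \<le> length w \<Longrightarrow> GoodP p x (take i w)"
    and tl: "tgt p (last w) = H" unfolding AccP_def by auto
  define un where "un n = replicate x 0 @ take n v" for n
  define cur where "cur n = (if n = 0 then 0 else tgt p (v ! (n - 1)))" for n
  have tw: "take (x + n) w = un n" for n using v(1) by (simp add: un_def)
  have Gn: "GoodP p x (un n)" if "1 \<le> n" "n \<le> length v" for n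
    using g[of "x + n"] that v(1) tw[of n] by simp
  have lastun: "last (un n) = v ! (n - 1)" if "1 \<le> n" "n \<le> length v" for n
  proof -
    have ne: "take n v \<noteq> []" using that v(2) by simp
    have "last (un n) = last (take n v)" unfolding un_def using ne by simp
    also have "\<dots> = v ! (n - 1)" by (rule last_take[OF that])
    finally show ?thesis .
  qed
  have vn: "valid p (v ! (n - 1))" if "1 \<le> n" "n \<le> length v" for n
    using v(3) that by (simp add: less_le_trans)
  have nn: "\<forall>r. 0 \<le> val p r (un n)" if "n \<le> length v" for n
  proof (cases "n = 0")
    case True then show ?thesis by (simp add: un_def val_rep)
  next
    case False
    then have "\<forall>r<RB p. 0 \<le> val p r (un n)" using Gn[of n] that unfolding GoodP_def by simp
    then show ?thesis using val_nonneg by blast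
  qed
  have bn: "\<forall>q<QB p. bal p q (un n) = (if q = cur n then 1 else 0)" if "n \<le> length v" for n
  proof (cases "n = 0")
    case True then show ?thesis by (simp add: un_def bal_rep cur_def)
  next
    case False
    then have "1 \<le> n" by simp
    then show ?thesis using Gn[of n] that lastun[of n] vn[of n] unfolding GoodP_def cur_def by auto
  qed
  have R0: "(\<lambda>r. nat (val p r (un 0))) = (\<lambda>_. 0)(0 := x)"
    by (auto simp: un_def val_rep fun_eq_iff)
  have main: "n \<le> length v \<Longrightarrow> reach p (0, (\<lambda>_. 0)(0 := x)) (cur n, \<lambda>r. nat (val p r (un n)))" for n
  proof (induction n)
    case 0
    have c0: "cur 0 = 0" by (simp add: cur_def)
    show ?case unfolding R0 c0 by (rule rtranclp.rtrancl_refl)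
  next
    case (Suc n)
    then have nl: "n < length v" by simp
    have ua: "un (Suc n) = un n @ [v ! n]" unfolding un_def using nl by (simp add: take_Suc_conv_app_nth)
    have a: "v ! n \<noteq> 0" "valid p (v ! n)" using v(3) nl by auto
    have "step p (cur n, \<lambda>r. nat (val p r (un n))) = Some (tgt p (v ! n), \<lambda>r. nat (val p r (un n @ [v ! n])))"
      by (rule word_step[OF a Gn[of "Suc n", unfolded ua] bn[of n] nn[of n]]) (use Suc.prems in auto)
    then have "stp p (cur n, \<lambda>r. nat (val p r (un n))) (cur (Suc n), \<lambda>r. nat (val p r (un (Suc n))))"
      by (simp add: stp_def ua cur_def)
    then show ?case using Suc.IH nl by (meson less_imp_le rtranclp.rtrancl_into_rtrancl)
  qed
  have "cur (length v) = H"
  proof -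
    have "cur (length v) = tgt p (last v)" using v(2) by (simp add: cur_def last_conv_nth)
    also have "last v = last w" using v by simp
    finally show ?thesis using tl by simp
  qed
  then show ?thesis using main[of "length v"] by auto
qed

primrec ref0 :: "cform \<Rightarrow> bool" and ref0t :: "cterm \<Rightarrow> bool" and ref0l :: "lsum \<Rightarrow> bool" where
  "ref0 (Sym a) = True"
| "ref0 (Ref j) = (j = 0)"
| "ref0 (Prev f) = ref0 f"
| "ref0 (Hist f) = ref0 f"
| "ref0 (Neg f) = ref0 f"
| "ref0 (Conj f g) = (ref0 f \<and> ref0 g)"
| "ref0 (Cmp s c k) = ref0l s"
| "ref0t (Count f) = ref0 f"
| "ref0t (Const c) = True"
| "ref0l LNil = True"
| "ref0l (LCons a t s) = (ref0t t \<and> ref0l s)"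

lemma wf_mono:
  "wf_form n m f \<Longrightarrow> n \<le> n' \<Longrightarrow> wf_form n' m f"
  "wf_term n m t \<Longrightarrow> n \<le> n' \<Longrightarrow> wf_term n' m t"
  "wf_lsum n m s \<Longrightarrow> n \<le> n' \<Longrightarrow> wf_lsum n' m s"
  by (induction f and t and s) auto

lemma pe_le1: "a \<le> b \<Longrightarrow> a \<le> prod_encode (b, c)"
  using le_prod_encode_1[of b c] by simp

lemma pe_le2: "a \<le> c \<Longrightarrow> a \<le> prod_encode (b, c)"
  using le_prod_encode_2[of c b] by simp

lemma wf_enc:
  "ref0 f \<Longrightarrow> wf_form (Suc (enc_form f)) 1 f"
  "ref0t t \<Longrightarrow> wf_term (Suc (enc_term t)) 1 t"
  "ref0l s \<Longrightarrow> wf_lsum (Suc (enc_lsum s)) 1 s"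
proof (induction f and t and s)
  case (Sym a) then show ?case using le_prod_encode_2[of a 0] by simp
next
  case (Ref j) then show ?case by simp
next
  case (Prev f) then show ?case by (auto intro: wf_mono pe_le2)
next
  case (Hist f) then show ?case by (auto intro: wf_mono pe_le2)
next
  case (Neg f) then show ?case by (auto intro: wf_mono pe_le2)
next
  case (Conj f g)
  have "enc_form f \<le> enc_form (Conj f g)" by (simp, rule pe_le2, rule pe_le1, simp)
  moreover have "enc_form g \<le> enc_form (Conj f g)" by (simp, rule pe_le2, rule pe_le2, simp)
  ultimately have "enc_form f \<le> enc_form (Conj f g)" "enc_form g \<le> enc_form (Conj f g)" by auto
  then show ?case using Conj by (auto intro: wf_mono)
next
  case (Cmp s c k)
  have "enc_lsum s \<le> enc_form (Cmp s c k)" by (simp, rule pe_le2, rule pe_le1, simp)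
  then show ?case using Cmp by (auto intro: wf_mono)
next
  case (Count f) then show ?case by (auto intro: wf_mono pe_le2)
next
  case (Const c) then show ?case by simp
next
  case LNil then show ?case by simp
next
  case (LCons a t s)
  have "enc_term t \<le> enc_lsum (LCons a t s)" by (simp, rule le_SucI, rule pe_le2, rule pe_le1, simp)
  moreover have "enc_lsum s \<le> enc_lsum (LCons a t s)" by (simp, rule le_SucI, rule pe_le2, rule pe_le2, simp)
  ultimately have "enc_term t \<le> enc_lsum (LCons a t s)" "enc_lsum s \<le> enc_lsum (LCons a t s)" by auto
  then show ?case using LCons by (auto intro: wf_mono)
qed

lemma ref0_ANDL[simp]: "ref0 (ANDL fs) \<longleftrightarrow> (\<forall>f\<in>set fs. ref0 f)"
  by (induction fs) (auto simp: TT_def)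

lemma wf_ANDL[simp]: "wf_form n m (ANDL fs) \<longleftrightarrow> (\<forall>f\<in>set fs. wf_form n m f)"
  by (induction fs) (auto simp: TT_def)

lemma ref0_TT[simp]: "ref0 TT" by (simp add: TT_def)

lemma ref0_SymIn[simp]: "ref0 (SymIn L)"
  by (induction L) (simp_all add: SymIn_def ORL_def)

lemma ref0_ORL[simp]: "ref0 (ORL fs) \<longleftrightarrow> (\<forall>f\<in>set fs. ref0 f)"
  by (induction fs) (simp_all add: ORL_def)

lemma ref0_BalF[simp]: "ref0 (BalF p q)"
  by (simp add: BalF_def Diff2_def)

lemma ref0_NonNegF[simp]: "ref0 (NonNegF p q)"
  by (simp add: NonNegF_def ValF_def Diff2_def)

lemma ref0_ZeroF[simp]: "ref0 (ZeroF p q)"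
  by (simp add: ZeroF_def IMP_def ValF_def Diff2_def)

lemma ref0_mainF: "ref0 (mainF p H)"
  by (auto simp: mainF_def GoodF_def LoadF_def IMP_def)

lemma wf_mainF_syms: "wf_form n m (mainF p H) \<Longrightarrow> valid p a \<Longrightarrow> a < n"
  by (simp add: mainF_def GoodF_def SymIn_def ORL_def)

section \<open>The encoding function as a recursive function\<close>

definition Kc :: nat where "Kc = enc_lsum (LCons 1 (Count (Sym 0)) LNil)"

definition Gval :: "nat \<Rightarrow> nat" where
  "Gval c = prod_encode (Suc c, Suc (prod_encode (prod_encode (6, prod_encode (Kc, prod_encode (2, 2 * c))),
              Suc (prod_encode (c, 0)))))"

lemma int_encode_nat: "int_encode (int c) = 2 * c"
  by (simp add: int_encode_def sum_encode_def)

lemma enc_inst: "enc_form f = c \<Longrightarrow> enc_instance (Suc c) [line0 c, f] = Gval c"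
  by (simp add: enc_instance_def line0_def Gval_def Kc_def int_encode_nat)

definition Gr :: recf where
  "Gr = Comp rpe [Comp S [Proj 0], Comp S [Comp rpe [Comp rpe [cst 6, Comp rpe [cst Kc, Comp rpe [cst 2, Comp radd [Proj 0, Proj 0]]]],
           Comp S [Comp rpe [Proj 0, cst 0]]]]]"

lemma eval_Gr: "eval Gr [c] (Gval c)"
  unfolding Gr_def Gval_def
  by (intro eval_comp2 eval_compS eval_Proj' eval_cst eval_dbl refl) (simp_all add: eval_cst eval_Z)

lemma codeat_self: "codeat p 0 p"
  by (simp add: codeat_def)

theorem theorem3p1:
  shows "\<not> (\<exists>f :: recf. \<forall>n ps. wf_prog n ps \<longrightarrow>
            eval f [enc_instance n ps] (if lang n ps = {} then 1 else 0))"
proof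
  assume "\<exists>f :: recf. \<forall>n ps. wf_prog n ps \<longrightarrow> eval f [enc_instance n ps] (if lang n ps = {} then 1 else 0)"
  then obtain f where fdec: "\<And>n ps. wf_prog n ps \<Longrightarrow> eval f [enc_instance n ps] (if lang n ps = {} then 1 else 0)"
    by blast
  define h where "h = Comp f [Gr]"
  define C where "C = compile h [0] 1 2 0"
  define L where "L = length C"
  define P where "P = C @ [Dec 1 (Suc L) (Suc (Suc L))]"
  define H where "H = Suc L"
  define c where "c = enc_form (mainF P H)"
  define ps where "ps = [line0 c, mainF P H]"
  define v where "v = (if lang (Suc c) ps = {} then 1 else (0::nat))"
  have wfm: "wf_form (Suc c) 1 (mainF P H)" unfolding c_def by (rule wf_enc(1)[OF ref0_mainF])
  have wf: "wf_prog (Suc c) ps"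
    unfolding wf_prog_def ps_def using wfm by (auto simp: less_Suc_eq line0_def)
  have ef: "eval f [Gval c] v" using fdec[OF wf] enc_inst[OF c_def[symmetric]] by (simp add: v_def ps_def)
  have eh: "eval h [c] v" unfolding h_def by (rule eval_Comp[where ys="[Gval c]"]) (auto intro: eval_Gr ef)
  define R0 where "R0 = (\<lambda>_::nat. 0::nat)(0 := c)"
  have cP: "codeat P 0 C" "codeat P L [Dec 1 (Suc L) (Suc (Suc L))]"
    using codeat_self[of P] unfolding P_def L_def by simp_all
  obtain R' where R': "reach P (0, R0) (L, R')" "R' 1 = v"
    using QcD[OF compile_correct[OF eh], of "[0]" R0 2 1 P 0] cP(1)
    by (auto simp: R0_def C_def L_def)
  have HP: "H = length P" by (simp add: H_def P_def L_def)
  have H0: "H \<noteq> 0" by (simp add: H_def)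
  have syms_lt: "valid P a \<Longrightarrow> a < Suc c" for a using wf_mainF_syms[OF wfm] .
  show False
  proof (cases "lang (Suc c) ps = {}")
    case True
    then have "R' 1 = 1" using R'(2) by (simp add: v_def)
    then have "stp P (L, R') (Suc L, R'(1 := R' 1 - 1))" by (intro stp_DecS[OF cP(2)]) simp
    then have "reach P (0, R0) (H, R'(1 := R' 1 - 1))" using R'(1) unfolding H_def by simp
    then obtain w where w: "AccP P c H w" "\<forall>a\<in>set w. valid P a"
      using word_of_run[OF _ H0] unfolding R0_def by blast
    have "w \<in> lang (Suc c) ps"
      unfolding lang_def ps_def using w syms_lt accepts_iff by auto
    then show False using True by simp
  next
    case False
    then obtain w where "w \<in> lang (Suc c) ps" by auto
    then have "AccP P c H w" unfolding lang_def ps_def using accepts_iff by auto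
    then obtain R'' where R'': "reach P (0, R0) (H, R'')" using run_of_word[OF _ H0] unfolding R0_def by blast
    have "R' 1 = 0" using R'(2) False by (simp add: v_def)
    then have st: "stp P (L, R') (Suc (Suc L), R')" by (intro stp_Dec0[OF cP(2)])
    have none: "step P (H, R'') = None" using HP by simp
    have "reach P (L, R') (H, R'')" by (rule reach_det[OF R'(1) R'' none])
    then show False
    proof (cases rule: converse_rtranclpE)
      case base then show False by (simp add: H_def)
    next
      case (step y)
      then have "y = (Suc (Suc L), R')" using st by (simp add: stp_def)
      then have r2: "reach P (Suc (Suc L), R') (H, R'')" using step(2) by simp
      have none2: "step P (Suc (Suc L), R') = None" by (simp add: P_def L_def)
      from r2 show False
      proof (cases rule: converse_rtranclpE)
        case base then show False by (simp add: H_def)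
      next
        case (step z) then show False using none2 by (simp add: stp_def)
      qed
    qed
  qed
qed

end
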